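(* If a complex number $\alpha$ can be computed by a radical computation tree and $K$ is the splitting field of an irreducible polynomial over $\mathbf{Q}$ having $\alpha$ as one of its roots, then $\mathrm{Gal}(K/\mathbf{Q})$ does not contain the symmetric group $S_n$ as a subgroup for any $n\ge 5$.
   Context: An algebraic computation tree is a rooted tree whose computation nodes compute a value as the sum, difference, product or quotient of integer constants and values computed at ancestor nodes, and whose decision nodes test whether a computed value is greater than zero and branch. A radical computation tree additionally allows computing the $k$-th root of a previously computed value ($k$ an integer parameter) and complex conjugation. A value is computed by the tree if it is computed at some node. *)

theory Defs
  imports "HOL-Algebra.Sym_Groups" "HOL-Computational_Algebra.Polynomial_Factorial"
begin

datatype arith_op = OpAdd | OpSub | OpMul | OpDiv

text \<open>An operand of a computation node: an integer constant, or the value computed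
  at the i-th ancestor computation node (counted from the root, starting at 0).\<close>
datatype operand = Cst int | Val nat

datatype rct =
    Stop
  | Arith arith_op operand operand rct
  | Root nat operand rct
  | Conjg operand rct
  | Decide operand rct rct

fun opnd_ok :: "complex list \<Rightarrow> operand \<Rightarrow> bool" where
  "opnd_ok vs (Cst c) = True"
| "opnd_ok vs (Val i) = (i < length vs)"

fun opnd_val :: "complex list \<Rightarrow> operand \<Rightarrow> complex" where
  "opnd_val vs (Cst c) = of_int c"
| "opnd_val vs (Val i) = vs ! i"

fun arith_val :: "arith_op \<Rightarrow> complex \<Rightarrow> complex \<Rightarrow> complex" where
  "arith_val OpAdd x y = x + y"
| "arith_val OpSub x y = x - y"
| "arith_val OpMul x y = x * y"
| "arith_val OpDiv x y = x / y"

text \<open>computes_at vs T x: running the (sub)tree T, where vs are the values computed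
  at the ancestor computation nodes, the value x is computed at some node of T.
  A k-th root node may compute any k-th root (k \<ge> 1) of its argument; a quotient
  node is only executable when the divisor is nonzero; a decision node tests whether
  the (complex) value is a positive real number.\<close>
inductive computes_at :: "complex list \<Rightarrow> rct \<Rightarrow> complex \<Rightarrow> bool" where
  arith_here: "\<lbrakk>opnd_ok vs a; opnd_ok vs b; op = OpDiv \<longrightarrow> opnd_val vs b \<noteq> 0\<rbrakk>
     \<Longrightarrow> computes_at vs (Arith op a b T) (arith_val op (opnd_val vs a) (opnd_val vs b))"
| arith_later: "\<lbrakk>opnd_ok vs a; opnd_ok vs b; op = OpDiv \<longrightarrow> opnd_val vs b \<noteq> 0;
     computes_at (vs @ [arith_val op (opnd_val vs a) (opnd_val vs b)]) T x\<rbrakk>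
     \<Longrightarrow> computes_at vs (Arith op a b T) x"
| root_here: "\<lbrakk>opnd_ok vs a; k \<ge> 1; y ^ k = opnd_val vs a\<rbrakk>
     \<Longrightarrow> computes_at vs (Root k a T) y"
| root_later: "\<lbrakk>opnd_ok vs a; k \<ge> 1; y ^ k = opnd_val vs a; computes_at (vs @ [y]) T x\<rbrakk>
     \<Longrightarrow> computes_at vs (Root k a T) x"
| conj_here: "opnd_ok vs a \<Longrightarrow> computes_at vs (Conjg a T) (cnj (opnd_val vs a))"
| conj_later: "\<lbrakk>opnd_ok vs a; computes_at (vs @ [cnj (opnd_val vs a)]) T x\<rbrakk>
     \<Longrightarrow> computes_at vs (Conjg a T) x"
| dec_pos: "\<lbrakk>opnd_ok vs a; Im (opnd_val vs a) = 0 \<and> Re (opnd_val vs a) > 0; computes_at vs T1 x\<rbrakk>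
     \<Longrightarrow> computes_at vs (Decide a T1 T2) x"
| dec_nonpos: "\<lbrakk>opnd_ok vs a; \<not> (Im (opnd_val vs a) = 0 \<and> Re (opnd_val vs a) > 0); computes_at vs T2 x\<rbrakk>
     \<Longrightarrow> computes_at vs (Decide a T1 T2) x"

definition radical_computable :: "complex \<Rightarrow> bool" where
  "radical_computable \<alpha> \<longleftrightarrow> (\<exists>T. computes_at [] T \<alpha>)"

inductive_set gen_subfield :: "complex set \<Rightarrow> complex set" for S where
  gen: "x \<in> S \<Longrightarrow> x \<in> gen_subfield S"
| zero: "0 \<in> gen_subfield S"
| one: "1 \<in> gen_subfield S"
| add: "x \<in> gen_subfield S \<Longrightarrow> y \<in> gen_subfield S \<Longrightarrow> x + y \<in> gen_subfield S"
| neg: "x \<in> gen_subfield S \<Longrightarrow> - x \<in> gen_subfield S"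
| mult: "x \<in> gen_subfield S \<Longrightarrow> y \<in> gen_subfield S \<Longrightarrow> x * y \<in> gen_subfield S"
| inv: "x \<in> gen_subfield S \<Longrightarrow> inverse x \<in> gen_subfield S"

definition splitting_field :: "rat poly \<Rightarrow> complex set" where
  "splitting_field p = gen_subfield {z. poly (map_poly of_rat p) z = 0}"

text \<open>Automorphisms of a subfield K of \<complex> fixing \<rat> pointwise; extended by the
  identity outside K so that they are uniquely represented.\<close>
definition gal_auts :: "complex set \<Rightarrow> (complex \<Rightarrow> complex) set" where
  "gal_auts K = {\<sigma>. bij_betw \<sigma> K K
      \<and> (\<forall>x\<in>K. \<forall>y\<in>K. \<sigma> (x + y) = \<sigma> x + \<sigma> y \<and> \<sigma> (x * y) = \<sigma> x * \<sigma> y)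
      \<and> (\<forall>q. \<sigma> (of_rat q) = of_rat q)
      \<and> (\<forall>x. x \<notin> K \<longrightarrow> \<sigma> x = x)}"

definition Gal :: "complex set \<Rightarrow> (complex \<Rightarrow> complex) monoid" where
  "Gal K = \<lparr>carrier = gal_auts K, mult = (\<circ>), one = id\<rparr>"

end

theory Submission
  imports Defs "HOL-Computational_Algebra.Fundamental_Theorem_Algebra"
begin

definition csubfield :: "complex set \<Rightarrow> bool" where
  "csubfield F \<longleftrightarrow> 0 \<in> F \<and> 1 \<in> F \<and> (\<forall>x\<in>F. \<forall>y\<in>F. x + y \<in> F \<and> x * y \<in> F)
     \<and> (\<forall>x\<in>F. - x \<in> F \<and> inverse x \<in> F)"

lemma csubfieldD:
  assumes "csubfield F"
  shows "0 \<in> F" "1 \<in> F" "x \<in> F \<Longrightarrow> y \<in> F \<Longrightarrow> x + y \<in> F"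
    "x \<in> F \<Longrightarrow> y \<in> F \<Longrightarrow> x * y \<in> F" "x \<in> F \<Longrightarrow> - x \<in> F" "x \<in> F \<Longrightarrow> inverse x \<in> F"
  using assms unfolding csubfield_def by auto

lemma csubfield_diff: "csubfield F \<Longrightarrow> x \<in> F \<Longrightarrow> y \<in> F \<Longrightarrow> x - y \<in> F"
  using csubfieldD[of F] by (metis diff_conv_add_uminus)

lemma csubfield_divide: "csubfield F \<Longrightarrow> x \<in> F \<Longrightarrow> y \<in> F \<Longrightarrow> x / y \<in> F"
  using csubfieldD[of F] by (metis divide_inverse)

lemma csubfield_of_nat: "csubfield F \<Longrightarrow> of_nat n \<in> F"
  by (induction n) (auto intro: csubfieldD)

lemma csubfield_of_int: "csubfield F \<Longrightarrow> of_int n \<in> F"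
proof (cases "n \<ge> 0")
  case True
  assume "csubfield F" then show ?thesis using csubfield_of_nat[of F "nat n"] True by simp
next
  case False
  assume F: "csubfield F"
  have "of_int n = - (of_nat (nat (- n)) :: complex)" using False by simp
  then show ?thesis using csubfield_of_nat[OF F] csubfieldD(5)[OF F] by metis
qed

lemma csubfield_of_rat: "csubfield F \<Longrightarrow> of_rat q \<in> F"
proof -
  assume F: "csubfield F"
  obtain a b where q: "q = Rat.Fract a b" "b \<noteq> 0" by (cases q) auto
  have "of_rat q = (of_int a / of_int b :: complex)" using q by (simp add: of_rat_rat)
  then show ?thesis using csubfield_divide[OF F] csubfield_of_int[OF F] by metis
qed

lemma csubfield_Rats: "csubfield F \<Longrightarrow> \<rat> \<subseteq> F"
  using csubfield_of_rat by (auto elim: Rats_cases)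

lemma csubfield_power: "csubfield F \<Longrightarrow> x \<in> F \<Longrightarrow> x ^ n \<in> F"
  by (induction n) (auto intro: csubfieldD)

lemma csubfield_sum: "csubfield F \<Longrightarrow> (\<And>i. i \<in> A \<Longrightarrow> f i \<in> F) \<Longrightarrow> sum f A \<in> F"
  by (induction A rule: infinite_finite_induct) (auto intro: csubfieldD)

lemma csubfield_prod: "csubfield F \<Longrightarrow> (\<And>i. i \<in> A \<Longrightarrow> f i \<in> F) \<Longrightarrow> prod f A \<in> F"
  by (induction A rule: infinite_finite_induct) (auto intro: csubfieldD)

lemma csubfield_poly:
  assumes "csubfield F" "\<forall>i. coeff P i \<in> F" "x \<in> F" shows "poly P x \<in> F"
  unfolding poly_altdef using assms
  by (auto intro!: csubfield_sum csubfieldD(4) csubfield_power)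

lemma csubfield_gen: "csubfield (gen_subfield S)"
  unfolding csubfield_def by (auto intro: gen_subfield.intros)

lemma gen_subfield_least_aux: "x \<in> gen_subfield S \<Longrightarrow> S \<subseteq> L \<Longrightarrow> csubfield L \<Longrightarrow> x \<in> L"
  by (induction rule: gen_subfield.induct) (auto intro: csubfieldD)

lemma gen_subfield_least: "S \<subseteq> L \<Longrightarrow> csubfield L \<Longrightarrow> gen_subfield S \<subseteq> L"
  using gen_subfield_least_aux by blast

lemma gen_subfield_mono: "S \<subseteq> T \<Longrightarrow> gen_subfield S \<subseteq> gen_subfield T"
  by (meson csubfield_gen gen_subfield.gen gen_subfield_least subset_iff)

lemma gen_subfield_sub: "S \<subseteq> gen_subfield S"
  by (auto intro: gen_subfield.gen)

lemma gen_subfield_idem: "csubfield F \<Longrightarrow> gen_subfield F = F"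
  by (simp add: gen_subfield_least gen_subfield_sub subset_antisym)

lemma gen_subfield_Un_gen: "gen_subfield (gen_subfield A \<union> B) = gen_subfield (A \<union> B)"
proof
  show "gen_subfield (gen_subfield A \<union> B) \<subseteq> gen_subfield (A \<union> B)"
    by (intro gen_subfield_least csubfield_gen)
       (meson Un_least Un_upper1 Un_upper2 gen_subfield_mono gen_subfield_sub order_trans)
  show "gen_subfield (A \<union> B) \<subseteq> gen_subfield (gen_subfield A \<union> B)"
    by (intro gen_subfield_mono) (use gen_subfield_sub in blast)
qed

lemma poly_altdef_le:
  fixes p :: "complex poly"
  assumes "degree p \<le> n" shows "poly p x = (\<Sum>i\<le>n. coeff p i * x ^ i)"
proof -
  have "(\<Sum>i\<le>n. coeff p i * x ^ i) = (\<Sum>i\<le>degree p. coeff p i * x ^ i)"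
    by (rule sum.mono_neutral_right) (use assms in \<open>auto simp: coeff_eq_0\<close>)
  then show ?thesis by (simp add: poly_altdef)
qed

section \<open>Field homomorphisms on subfields\<close>

definition hom_on :: "complex set \<Rightarrow> (complex \<Rightarrow> complex) \<Rightarrow> bool" where
  "hom_on L f \<longleftrightarrow> (\<forall>x\<in>L. \<forall>y\<in>L. f (x + y) = f x + f y \<and> f (x * y) = f x * f y) \<and> f 1 = 1"

lemma hom_image_csubfield:
  assumes L: "csubfield L" and f: "hom_on L f" shows "csubfield (f ` L)"
proof -
  have a: "f (x + y) = f x + f y" "f (x * y) = f x * f y" if "x \<in> L" "y \<in> L" for x y
    using f that unfolding hom_on_def by auto
  have o: "f 1 = 1" using f unfolding hom_on_def by auto
  have z: "f 0 = 0" using a(1)[of 0 0] csubfieldD(1)[OF L] by simp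
  have n: "f (- x) = - f x" if "x \<in> L" for x
    using a(1)[of x "-x"] csubfieldD(5)[OF L that] z that by (simp add: eq_neg_iff_add_eq_0 add.commute)
  have i: "f (inverse x) = inverse (f x)" if "x \<in> L" for x
  proof (cases "x = 0")
    case True then show ?thesis using z by simp
  next
    case False
    have "f x * f (inverse x) = 1" using a(2)[OF that csubfieldD(6)[OF L that]] False o by simp
    then show ?thesis by (simp add: inverse_unique)
  qed
  show ?thesis unfolding csubfield_def
  proof (intro conjI ballI)
    show "0 \<in> f ` L" using z csubfieldD(1)[OF L] by (metis image_eqI)
    show "1 \<in> f ` L" using o csubfieldD(2)[OF L] by (metis image_eqI)
    fix x y assume "x \<in> f ` L" "y \<in> f ` L"
    then obtain u v where uv: "u \<in> L" "v \<in> L" "x = f u" "y = f v" by auto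
    show "x + y \<in> f ` L" using a(1)[OF uv(1,2)] csubfieldD(3)[OF L uv(1,2)] uv by (metis image_eqI)
    show "x * y \<in> f ` L" using a(2)[OF uv(1,2)] csubfieldD(4)[OF L uv(1,2)] uv by (metis image_eqI)
  next
    fix x assume "x \<in> f ` L"
    then obtain u where u: "u \<in> L" "x = f u" by auto
    show "- x \<in> f ` L" using n[OF u(1)] csubfieldD(5)[OF L u(1)] u by (metis image_eqI)
    show "inverse x \<in> f ` L" using i[OF u(1)] csubfieldD(6)[OF L u(1)] u by (metis image_eqI)
  qed
qed

context
  fixes L f assumes L: "csubfield L" and f: "hom_on L f"
begin

lemma hom_add: "x \<in> L \<Longrightarrow> y \<in> L \<Longrightarrow> f (x + y) = f x + f y"
  using f unfolding hom_on_def by auto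

lemma hom_mult: "x \<in> L \<Longrightarrow> y \<in> L \<Longrightarrow> f (x * y) = f x * f y"
  using f unfolding hom_on_def by auto

lemma hom_one: "f 1 = 1"
  using f unfolding hom_on_def by auto

lemma hom_zero: "f 0 = 0"
  using hom_add[of 0 0] csubfieldD(1)[OF L] by simp

lemma hom_uminus: "x \<in> L \<Longrightarrow> f (- x) = - f x"
  using hom_add[of x "-x"] csubfieldD(5)[OF L] hom_zero by (simp add: eq_neg_iff_add_eq_0 add.commute)

lemma hom_diff: "x \<in> L \<Longrightarrow> y \<in> L \<Longrightarrow> f (x - y) = f x - f y"
  using hom_add[of x "-y"] hom_uminus[of y] csubfieldD(5)[OF L] by simp

lemma hom_inverse: "x \<in> L \<Longrightarrow> f (inverse x) = inverse (f x)"
proof (cases "x = 0")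
  case True then show ?thesis using hom_zero by simp
next
  case False
  assume x: "x \<in> L"
  have "f x * f (inverse x) = 1"
    using hom_mult[OF x csubfieldD(6)[OF L x]] False hom_one by simp
  then show ?thesis by (simp add: inverse_unique)
qed

lemma hom_divide: "x \<in> L \<Longrightarrow> y \<in> L \<Longrightarrow> f (x / y) = f x / f y"
  using hom_mult[of x "inverse y"] hom_inverse[of y] csubfieldD(6)[OF L] by (simp add: divide_inverse)

lemma hom_nonzero: "x \<in> L \<Longrightarrow> x \<noteq> 0 \<Longrightarrow> f x \<noteq> 0"
  using hom_mult[of x "inverse x"] csubfieldD(6)[OF L] hom_one by fastforce

lemma hom_inj: "x \<in> L \<Longrightarrow> y \<in> L \<Longrightarrow> f x = f y \<Longrightarrow> x = y"
  using hom_nonzero[of "x - y"] hom_diff csubfield_diff[OF L] by fastforce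

lemma hom_inj_on: "inj_on f L"
  using hom_inj by (auto simp: inj_on_def)

lemma hom_of_nat: "f (of_nat n) = of_nat n"
  by (induction n) (auto simp: hom_zero hom_one hom_add csubfield_of_nat[OF L] csubfieldD[OF L])

lemma hom_of_int: "f (of_int n) = of_int n"
proof (cases "n \<ge> 0")
  case True then show ?thesis using hom_of_nat[of "nat n"] by simp
next
  case False
  have "of_int n = - (of_nat (nat (- n)) :: complex)" using False by simp
  then show ?thesis using hom_uminus csubfield_of_nat[OF L] hom_of_nat by metis
qed

lemma hom_of_rat: "f (of_rat q) = of_rat q"
proof -
  obtain a b where q: "q = Rat.Fract a b" "b \<noteq> 0" by (cases q) auto
  have "of_rat q = (of_int a / of_int b :: complex)" using q by (simp add: of_rat_rat)
  then show ?thesis using hom_divide csubfield_of_int[OF L] hom_of_int by metis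
qed

lemma hom_power: "x \<in> L \<Longrightarrow> f (x ^ n) = f x ^ n"
  by (induction n) (auto simp: hom_one hom_mult csubfield_power[OF L])

lemma hom_sum: "(\<And>i. i \<in> A \<Longrightarrow> g i \<in> L) \<Longrightarrow> f (sum g A) = (\<Sum>i\<in>A. f (g i))"
  by (induction A rule: infinite_finite_induct) (auto simp: hom_zero hom_add csubfield_sum[OF L])

lemma hom_prod: "(\<And>i. i \<in> A \<Longrightarrow> g i \<in> L) \<Longrightarrow> f (prod g A) = (\<Prod>i\<in>A. f (g i))"
  by (induction A rule: infinite_finite_induct) (auto simp: hom_one hom_mult csubfield_prod[OF L])


lemma hom_poly:
  assumes "\<forall>i. coeff P i \<in> L" "x \<in> L"
  shows "f (poly P x) = poly (map_poly f P) (f x)"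
proof -
  have "f (poly P x) = (\<Sum>i\<le>degree P. f (coeff P i) * f x ^ i)"
    unfolding poly_altdef using assms
    by (subst hom_sum) (auto simp: hom_mult hom_power csubfield_power[OF L] intro!: csubfieldD(4)[OF L])
  also have "\<dots> = poly (map_poly f P) (f x)"
    by (subst poly_altdef_le[where n = "degree P"])
       (auto simp: coeff_map_poly hom_zero map_poly_degree_leq intro!: sum.cong)
  finally show ?thesis .
qed

lemma hom_poly_rat:
  assumes "x \<in> L" shows "f (poly (map_poly of_rat P) x) = poly (map_poly of_rat P) (f x)"
proof -
  have "map_poly f (map_poly of_rat P) = map_poly of_rat P"
    by (rule poly_eqI) (simp add: coeff_map_poly hom_zero hom_of_rat)
  then show ?thesis
    using hom_poly[of "map_poly of_rat P" x] assms csubfield_of_rat[OF L]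
    by (simp add: coeff_map_poly)
qed

lemma hom_gen_image:
  assumes "gen_subfield S \<subseteq> L"
  shows "f ` gen_subfield S = gen_subfield (f ` S)"
proof
  show "f ` gen_subfield S \<subseteq> gen_subfield (f ` S)"
  proof
    fix y assume "y \<in> f ` gen_subfield S"
    then obtain x where x: "x \<in> gen_subfield S" "y = f x" by auto
    have "x \<in> gen_subfield S \<Longrightarrow> f x \<in> gen_subfield (f ` S)"
    proof (induction rule: gen_subfield.induct)
      case (gen x) then show ?case by (auto intro: gen_subfield.gen)
    next
      case zero then show ?case by (simp add: hom_zero gen_subfield.zero)
    next
      case one then show ?case by (simp add: hom_one gen_subfield.one)
    next
      case (add x y) then show ?case
        using assms by (subst hom_add) (auto intro: gen_subfield.add)
    next
      case (neg x) then show ?case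
        using assms by (subst hom_uminus) (auto intro: gen_subfield.neg)
    next
      case (mult x y) then show ?case
        using assms by (subst hom_mult) (auto intro: gen_subfield.mult)
    next
      case (inv x) then show ?case
        using assms by (subst hom_inverse) (auto intro: gen_subfield.inv)
    qed
    then show "y \<in> gen_subfield (f ` S)" using x by simp
  qed
next
  have "csubfield (f ` gen_subfield S)"
    by (rule hom_image_csubfield[OF csubfield_gen]) (use f assms in \<open>auto simp: hom_on_def\<close>)
  then show "gen_subfield (f ` S) \<subseteq> f ` gen_subfield S"
    by (intro gen_subfield_least) (use gen_subfield_sub in blast)
qed

end

lemma hom_on_subset: "hom_on L f \<Longrightarrow> M \<subseteq> L \<Longrightarrow> hom_on M f"
  unfolding hom_on_def by blast

lemma hom_agree_gen:
  assumes L: "csubfield L" and f: "hom_on L f" and g: "hom_on L g" and S: "gen_subfield S \<subseteq> L"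
    and eq: "\<And>x. x \<in> S \<Longrightarrow> f x = g x"
  shows "x \<in> gen_subfield S \<Longrightarrow> f x = g x"
proof (induction rule: gen_subfield.induct)
  case (gen x) then show ?case by (rule eq)
next
  case zero then show ?case using hom_zero[OF L f] hom_zero[OF L g] by simp
next
  case one then show ?case using hom_one[OF L f] hom_one[OF L g] by simp
next
  case (add x y) then show ?case using S hom_add[OF L f] hom_add[OF L g] by (auto simp: subset_iff)
next
  case (neg x) then show ?case using S hom_uminus[OF L f] hom_uminus[OF L g] by (auto simp: subset_iff)
next
  case (mult x y) then show ?case using S hom_mult[OF L f] hom_mult[OF L g] by (auto simp: subset_iff)
next
  case (inv x) then show ?case using S hom_inverse[OF L f] hom_inverse[OF L g] by (auto simp: subset_iff)
qed

definition polyF :: "complex set \<Rightarrow> complex poly \<Rightarrow> bool" where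
  "polyF F p \<longleftrightarrow> (\<forall>i. coeff p i \<in> F)"

context fixes F assumes F: "csubfield F"
begin

lemma polyF_0[simp]: "polyF F 0"
  using csubfieldD(1)[OF F] by (simp add: polyF_def)

lemma polyF_const: "c \<in> F \<Longrightarrow> polyF F [:c:]"
  using csubfieldD(1)[OF F] by (simp add: polyF_def coeff_pCons split: nat.split)

lemma polyF_1[simp]: "polyF F 1"
  using polyF_const[OF csubfieldD(2)[OF F]] by (simp add: one_pCons)

lemma polyF_X[simp]: "polyF F [:0, 1:]"
  using csubfieldD(1,2)[OF F] by (simp add: polyF_def coeff_pCons split: nat.split)

lemma polyF_monom: "c \<in> F \<Longrightarrow> polyF F (monom c n)"
  using csubfieldD(1)[OF F] by (simp add: polyF_def coeff_monom)

lemma polyF_add: "polyF F p \<Longrightarrow> polyF F q \<Longrightarrow> polyF F (p + q)"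
  using csubfieldD(3)[OF F] by (simp add: polyF_def)

lemma polyF_uminus: "polyF F p \<Longrightarrow> polyF F (- p)"
  using csubfieldD(5)[OF F] by (simp add: polyF_def)

lemma polyF_diff: "polyF F p \<Longrightarrow> polyF F q \<Longrightarrow> polyF F (p - q)"
  using csubfield_diff[OF F] by (simp add: polyF_def)

lemma polyF_mult: "polyF F p \<Longrightarrow> polyF F q \<Longrightarrow> polyF F (p * q)"
  unfolding polyF_def coeff_mult
  by (auto intro!: csubfield_sum[OF F] csubfieldD(4)[OF F])

lemma polyF_smult: "c \<in> F \<Longrightarrow> polyF F p \<Longrightarrow> polyF F (smult c p)"
  using csubfieldD(4)[OF F] by (simp add: polyF_def)

lemma polyF_poly: "polyF F p \<Longrightarrow> x \<in> F \<Longrightarrow> poly p x \<in> F"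
  using csubfield_poly[OF F] by (simp add: polyF_def)

lemma polyF_division:
  assumes "polyF F d" "d \<noteq> 0"
  shows "polyF F g \<Longrightarrow> \<exists>q r. polyF F q \<and> polyF F r \<and> g = q * d + r \<and> (r = 0 \<or> degree r < degree d)"
proof (induction "degree g" arbitrary: g rule: less_induct)
  case less
  show ?case
  proof (cases "g = 0 \<or> degree g < degree d")
    case True
    then show ?thesis using less.prems by (intro exI[of _ 0] exI[of _ g]) auto
  next
    case False
    then have g0: "g \<noteq> 0" and dg: "degree d \<le> degree g" by auto
    define c where "c = lead_coeff g / lead_coeff d"
    define t where "t = monom c (degree g - degree d)"
    define g' where "g' = g - t * d"
    have cF: "c \<in> F" unfolding c_def using less.prems assms(1)
      by (auto intro!: csubfield_divide[OF F] simp: polyF_def)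
    have tF: "polyF F t" unfolding t_def using polyF_monom[OF cF] .
    have g'F: "polyF F g'" unfolding g'_def using polyF_diff polyF_mult tF assms(1) less.prems by blast
    have ld: "lead_coeff d \<noteq> 0" using assms(2) by simp
    have coeffs: "coeff g' i = 0" if "i \<ge> degree g" for i
    proof (cases "i = degree g")
      case True
      have "coeff (t * d) i = c * coeff d (degree d)"
        unfolding t_def using True dg by (simp add: coeff_monom_mult)
      also have "\<dots> = lead_coeff g" unfolding c_def using ld by simp
      finally show ?thesis unfolding g'_def using True by simp
    next
      case False
      then have i: "i > degree g" using that by simp
      have "coeff (t * d) i = c * coeff d (i - (degree g - degree d))"
        unfolding t_def using i dg by (simp add: coeff_monom_mult)
      also have "coeff d (i - (degree g - degree d)) = 0"
        using i dg by (intro coeff_eq_0) linarith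
      finally show ?thesis unfolding g'_def using i by (simp add: coeff_eq_0)
    qed
    show ?thesis
    proof (cases "g' = 0")
      case True
      then show ?thesis using tF by (intro exI[of _ t] exI[of _ 0]) (auto simp: g'_def)
    next
      case False
      have "degree g' < degree g"
      proof (rule ccontr)
        assume "\<not> degree g' < degree g"
        then have "coeff g' (degree g') = 0" using coeffs by simp
        then show False using False by simp
      qed
      then obtain q r where qr: "polyF F q" "polyF F r" "g' = q * d + r" "r = 0 \<or> degree r < degree d"
        using less.hyps g'F by blast
      have "g = (q + t) * d + r" using qr(3) unfolding g'_def by (simp add: algebra_simps)
      then show ?thesis using qr polyF_add[OF qr(1) tF] by blast
    qed
  qed
qed

definition minpolyF :: "complex \<Rightarrow> complex poly \<Rightarrow> bool" where
  "minpolyF \<beta> m \<longleftrightarrow> polyF F m \<and> m \<noteq> 0 \<and> poly m \<beta> = 0 \<and>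
     (\<forall>g. polyF F g \<and> g \<noteq> 0 \<and> poly g \<beta> = 0 \<longrightarrow> degree m \<le> degree g)"

lemma minpolyF_exists:
  assumes "polyF F g" "g \<noteq> 0" "poly g \<beta> = 0"
  shows "\<exists>m. minpolyF \<beta> m"
proof -
  obtain m where "polyF F m \<and> m \<noteq> 0 \<and> poly m \<beta> = 0"
    and "\<And>g. polyF F g \<and> g \<noteq> 0 \<and> poly g \<beta> = 0 \<Longrightarrow> degree m \<le> degree g"
    using ex_has_least_nat[of "\<lambda>g. polyF F g \<and> g \<noteq> 0 \<and> poly g \<beta> = 0" g degree] assms by blast
  then show ?thesis unfolding minpolyF_def by blast
qed

lemma minpolyF_dvd:
  assumes m: "minpolyF \<beta> m" and h: "polyF F h" "poly h \<beta> = 0"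
  shows "\<exists>q. polyF F q \<and> h = q * m"
proof -
  obtain q r where qr: "polyF F q" "polyF F r" "h = q * m + r" "r = 0 \<or> degree r < degree m"
    using polyF_division[of m h] m h unfolding minpolyF_def by blast
  have "poly r \<beta> = 0" using qr(3) h(2) m unfolding minpolyF_def by simp
  then have "r = 0" using qr(2,4) m unfolding minpolyF_def by (meson not_le)
  then show ?thesis using qr by auto
qed

lemma minpolyF_degree: "minpolyF \<beta> m \<Longrightarrow> degree m > 0"
proof (rule ccontr)
  assume m: "minpolyF \<beta> m" and "\<not> degree m > 0"
  then obtain c where "m = [:c:]" by (metis degree_eq_zeroE gr0I)
  then show False using m unfolding minpolyF_def by simp
qed

lemma polyF_inverse:
  assumes m: "minpolyF \<beta> m" and h: "polyF F h" "poly h \<beta> \<noteq> 0"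
  shows "\<exists>b. polyF F b \<and> poly b \<beta> * poly h \<beta> = 1"
proof -
  define I where "I = {p. p \<noteq> 0 \<and> (\<exists>a b. polyF F a \<and> polyF F b \<and> p = a * m + b * h)}"
  have "h \<in> I" unfolding I_def using h by (intro CollectI conjI exI[of _ 0] exI[of _ 1]) auto
  then obtain d where dI: "d \<in> I" and dmin: "\<And>p. p \<in> I \<Longrightarrow> degree d \<le> degree p"
    using ex_has_least_nat[of "\<lambda>p. p \<in> I" h degree] by blast
  obtain a b where ab: "polyF F a" "polyF F b" "d = a * m + b * h" and d0: "d \<noteq> 0"
    using dI unfolding I_def by blast
  have dF: "polyF F d" using ab polyF_add polyF_mult m h(1) unfolding minpolyF_def by auto
  have divides: "\<exists>q. polyF F q \<and> p = q * d" if pF: "polyF F p" and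
    pI: "\<exists>a b. polyF F a \<and> polyF F b \<and> p = a * m + b * h" for p
  proof -
    obtain q r where qr: "polyF F q" "polyF F r" "p = q * d + r" "r = 0 \<or> degree r < degree d"
      using polyF_division[OF dF d0 pF] by blast
    obtain a' b' where a'b': "polyF F a'" "polyF F b'" "p = a' * m + b' * h" using pI by blast
    have "r = (a' - q * a) * m + (b' - q * b) * h"
      using qr(3) a'b'(3) ab(3) by (simp add: algebra_simps)
    moreover have "polyF F (a' - q * a)" "polyF F (b' - q * b)"
      using a'b' qr ab by (auto intro!: polyF_diff polyF_mult)
    ultimately have "r \<noteq> 0 \<Longrightarrow> r \<in> I" unfolding I_def by blast
    then have "r = 0" using dmin qr(4) by (meson not_le)
    then show ?thesis using qr by auto
  qed
  have mF: "polyF F m" using m unfolding minpolyF_def by blast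
  have "\<exists>a b. polyF F a \<and> polyF F b \<and> m = a * m + b * h"
    by (intro exI[of _ 1] exI[of _ 0]) simp
  then obtain q where q: "polyF F q" "m = q * d" using divides[OF mF] by blast
  have "\<exists>a b. polyF F a \<and> polyF F b \<and> h = a * m + b * h"
    by (intro exI[of _ 0] exI[of _ 1]) simp
  then obtain q' where q': "polyF F q'" "h = q' * d" using divides[OF h(1)] by blast
  have dbeta: "poly d \<beta> \<noteq> 0" using q' h by auto
  have q0: "q \<noteq> 0" using q m unfolding minpolyF_def by auto
  have "poly q \<beta> = 0" using q(2) m dbeta unfolding minpolyF_def by simp
  then have "degree m \<le> degree q" using m q q0 unfolding minpolyF_def by blast
  moreover have "degree m = degree q + degree d" using q(2) q0 d0 by (simp add: degree_mult_eq)
  ultimately have "degree d = 0" by simp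
  then obtain c where c: "d = [:c:]" by (meson degree_eq_zeroE)
  have cF: "c \<in> F" using dF c unfolding polyF_def by (metis coeff_pCons_0)
  have c0: "c \<noteq> 0" using d0 c by simp
  have "poly d \<beta> = c" using c by simp
  moreover have "poly d \<beta> = poly b \<beta> * poly h \<beta>" using ab(3) m unfolding minpolyF_def by simp
  ultimately have "poly b \<beta> * poly h \<beta> = c" by simp
  then have "poly (smult (inverse c) b) \<beta> * poly h \<beta> = 1" using c0 by (simp add: field_simps)
  then show ?thesis using polyF_smult[OF csubfieldD(6)[OF F cF] ab(2)] by blast
qed

definition adjoin_set :: "complex \<Rightarrow> complex set" where
  "adjoin_set \<beta> = {poly h \<beta> | h. polyF F h}"

lemma adjoin_set_eq:
  assumes "polyF F g" "g \<noteq> 0" "poly g \<beta> = 0"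
  shows "gen_subfield (F \<union> {\<beta>}) = adjoin_set \<beta>"
proof
  obtain m where m: "minpolyF \<beta> m" using minpolyF_exists[OF assms] by blast
  have "csubfield (adjoin_set \<beta>)"
    unfolding csubfield_def adjoin_set_def
  proof (intro conjI ballI)
    show "0 \<in> {poly h \<beta> |h. polyF F h}" by (intro CollectI exI[of _ 0]) auto
    show "1 \<in> {poly h \<beta> |h. polyF F h}" by (intro CollectI exI[of _ 1]) auto
    fix x y assume "x \<in> {poly h \<beta> |h. polyF F h}" "y \<in> {poly h \<beta> |h. polyF F h}"
    then obtain h1 h2 where "polyF F h1" "polyF F h2" "x = poly h1 \<beta>" "y = poly h2 \<beta>" by auto
    then show "x + y \<in> {poly h \<beta> |h. polyF F h}" 
      by (intro CollectI exI[of _ "h1 + h2"] conjI) (simp_all add: polyF_add)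
    from \<open>polyF F h1\<close> \<open>polyF F h2\<close> \<open>x = poly h1 \<beta>\<close> \<open>y = poly h2 \<beta>\<close>
    show "x * y \<in> {poly h \<beta> |h. polyF F h}"
      by (intro CollectI exI[of _ "h1 * h2"] conjI) (simp_all add: polyF_mult)
  next
    fix x assume "x \<in> {poly h \<beta> |h. polyF F h}"
    then obtain h where h: "polyF F h" "x = poly h \<beta>" by auto
    show "- x \<in> {poly h \<beta> |h. polyF F h}" using h by (intro CollectI exI[of _ "- h"] conjI) (simp_all add: polyF_uminus)
    show "inverse x \<in> {poly h \<beta> |h. polyF F h}"
    proof (cases "x = 0")
      case True then show ?thesis by (intro CollectI exI[of _ 0] conjI) simp_all
    next
      case False
      then obtain b where "polyF F b" "poly b \<beta> * poly h \<beta> = 1" using polyF_inverse[OF m h(1)] h by auto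
      then have "inverse x = poly b \<beta>" using h by (metis inverse_unique mult.commute)
      then show ?thesis using \<open>polyF F b\<close> by blast
    qed
  qed
  moreover have "F \<union> {\<beta>} \<subseteq> adjoin_set \<beta>"
  proof
    fix x assume "x \<in> F \<union> {\<beta>}"
    then show "x \<in> adjoin_set \<beta>"
    proof
      assume "x \<in> F"
      then have "polyF F [:x:]" by (auto intro: polyF_const)
      then show ?thesis unfolding adjoin_set_def by (intro CollectI exI[of _ "[:x:]"]) auto
    next
      assume "x \<in> {\<beta>}"
      then show ?thesis unfolding adjoin_set_def by (intro CollectI exI[of _ "[:0, 1:]"]) auto
    qed
  qed
  ultimately show "gen_subfield (F \<union> {\<beta>}) \<subseteq> adjoin_set \<beta>" by (rule gen_subfield_least[rotated])
next
  show "adjoin_set \<beta> \<subseteq> gen_subfield (F \<union> {\<beta>})"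
    unfolding adjoin_set_def
  proof safe
    fix h assume "polyF F h"
    have G: "csubfield (gen_subfield (F \<union> {\<beta>}))" by (rule csubfield_gen)
    have b: "\<beta> \<in> gen_subfield (F \<union> {\<beta>})" by (simp add: gen_subfield.gen)
    have c: "coeff h i \<in> gen_subfield (F \<union> {\<beta>})" for i
      using \<open>polyF F h\<close> unfolding polyF_def by (simp add: gen_subfield.gen)
    show "poly h \<beta> \<in> gen_subfield (F \<union> {\<beta>})"
      unfolding poly_altdef
      by (intro csubfield_sum[OF G] csubfieldD(4)[OF G] c csubfield_power[OF G b])
  qed
qed

end

context fixes F \<sigma> assumes F: "csubfield F" and \<sigma>: "hom_on F \<sigma>"
begin

lemma coeff_map_hom: "coeff (map_poly \<sigma> p) i = \<sigma> (coeff p i)"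
  by (simp add: coeff_map_poly hom_zero[OF F \<sigma>])

lemma map_hom_add: "polyF F p \<Longrightarrow> polyF F q \<Longrightarrow> map_poly \<sigma> (p + q) = map_poly \<sigma> p + map_poly \<sigma> q"
  by (rule poly_eqI) (simp add: coeff_map_hom hom_add[OF F \<sigma>] polyF_def)

lemma map_hom_diff: "polyF F p \<Longrightarrow> polyF F q \<Longrightarrow> map_poly \<sigma> (p - q) = map_poly \<sigma> p - map_poly \<sigma> q"
  by (rule poly_eqI) (simp add: coeff_map_hom hom_diff[OF F \<sigma>] polyF_def)

lemma map_hom_mult: "polyF F p \<Longrightarrow> polyF F q \<Longrightarrow> map_poly \<sigma> (p * q) = map_poly \<sigma> p * map_poly \<sigma> q"
proof (rule poly_eqI)
  fix n assume p: "polyF F p" and q: "polyF F q"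
  have "\<sigma> (\<Sum>i\<le>n. coeff p i * coeff q (n - i)) = (\<Sum>i\<le>n. \<sigma> (coeff p i * coeff q (n - i)))"
    using p q by (intro hom_sum[OF F \<sigma>]) (auto simp: polyF_def intro!: csubfieldD(4)[OF F])
  also have "\<dots> = (\<Sum>i\<le>n. \<sigma> (coeff p i) * \<sigma> (coeff q (n - i)))"
    using p q by (intro sum.cong refl hom_mult[OF F \<sigma>]) (auto simp: polyF_def)
  finally show "coeff (map_poly \<sigma> (p * q)) n = coeff (map_poly \<sigma> p * map_poly \<sigma> q) n"
    by (simp add: coeff_map_hom coeff_mult)
qed

lemma map_hom_const: "c \<in> F \<Longrightarrow> map_poly \<sigma> [:c:] = [:\<sigma> c:]"
  by (rule poly_eqI) (simp add: coeff_map_hom coeff_pCons hom_zero[OF F \<sigma>] split: nat.split)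

lemma map_hom_X: "map_poly \<sigma> [:0, 1:] = [:0, 1:]"
  by (rule poly_eqI) (simp add: coeff_map_hom coeff_pCons hom_zero[OF F \<sigma>] hom_one[OF F \<sigma>] split: nat.split)

lemma map_hom_1: "map_poly \<sigma> 1 = 1"
  using map_hom_const[OF csubfieldD(2)[OF F]] by (simp add: hom_one[OF F \<sigma>] one_pCons)

lemma degree_map_hom: "polyF F p \<Longrightarrow> degree (map_poly \<sigma> p) = degree p"
proof (cases "p = 0")
  case False
  assume "polyF F p"
  then have "\<sigma> (lead_coeff p) \<noteq> 0" using False hom_nonzero[OF F \<sigma>] by (simp add: polyF_def)
  then have "coeff (map_poly \<sigma> p) (degree p) \<noteq> 0" by (simp add: coeff_map_hom)
  then show ?thesis by (meson antisym le_degree map_poly_degree_leq)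
qed simp

lemma extend_hom:
  assumes g: "polyF F g" "g \<noteq> 0" "poly g \<beta> = 0"
    and cond: "\<And>h. polyF F h \<Longrightarrow> poly h \<beta> = 0 \<Longrightarrow> poly (map_poly \<sigma> h) \<beta>' = 0"
  shows "\<exists>\<tau>. hom_on (gen_subfield (F \<union> {\<beta>})) \<tau> \<and> (\<forall>x\<in>F. \<tau> x = \<sigma> x) \<and> \<tau> \<beta> = \<beta>'"
proof -
  define rep where "rep x = (SOME h. polyF F h \<and> poly h \<beta> = x)" for x
  define \<tau> where "\<tau> x = poly (map_poly \<sigma> (rep x)) \<beta>'" for x
  have L: "gen_subfield (F \<union> {\<beta>}) = adjoin_set F \<beta>" using adjoin_set_eq[OF F g] .
  have wd: "poly (map_poly \<sigma> h1) \<beta>' = poly (map_poly \<sigma> h2) \<beta>'"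
    if "polyF F h1" "polyF F h2" "poly h1 \<beta> = poly h2 \<beta>" for h1 h2
  proof -
    have "poly (map_poly \<sigma> (h1 - h2)) \<beta>' = 0"
      using cond[of "h1 - h2"] polyF_diff[OF F that(1,2)] that(3) by simp
    then show ?thesis using map_hom_diff[OF that(1,2)] by simp
  qed
  have ev: "\<tau> (poly h \<beta>) = poly (map_poly \<sigma> h) \<beta>'" if "polyF F h" for h
  proof -
    have "\<exists>h'. polyF F h' \<and> poly h' \<beta> = poly h \<beta>" using that by blast
    then have "polyF F (rep (poly h \<beta>)) \<and> poly (rep (poly h \<beta>)) \<beta> = poly h \<beta>"
      unfolding rep_def by (rule someI_ex)
    then show ?thesis unfolding \<tau>_def using wd that by blast
  qed
  have mem: "x \<in> gen_subfield (F \<union> {\<beta>}) \<Longrightarrow> \<exists>h. polyF F h \<and> x = poly h \<beta>" for x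
    unfolding L adjoin_set_def[OF F] by blast
  have "hom_on (gen_subfield (F \<union> {\<beta>})) \<tau>"
    unfolding hom_on_def
  proof (intro conjI ballI)
    fix x y assume "x \<in> gen_subfield (F \<union> {\<beta>})" "y \<in> gen_subfield (F \<union> {\<beta>})"
    then obtain h1 h2 where h: "polyF F h1" "x = poly h1 \<beta>" "polyF F h2" "y = poly h2 \<beta>"
      using mem by blast
    have "\<tau> (x + y) = \<tau> (poly (h1 + h2) \<beta>)" using h by simp
    also have "\<dots> = poly (map_poly \<sigma> (h1 + h2)) \<beta>'" using ev polyF_add[OF F h(1,3)] by blast
    also have "\<dots> = \<tau> x + \<tau> y" using h ev map_hom_add[OF h(1,3)] by simp
    finally show "\<tau> (x + y) = \<tau> x + \<tau> y" .
    have "\<tau> (x * y) = \<tau> (poly (h1 * h2) \<beta>)" using h by simp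
    also have "\<dots> = poly (map_poly \<sigma> (h1 * h2)) \<beta>'" using ev polyF_mult[OF F h(1,3)] by blast
    also have "\<dots> = \<tau> x * \<tau> y" using h ev map_hom_mult[OF h(1,3)] by simp
    finally show "\<tau> (x * y) = \<tau> x * \<tau> y" .
  next
    show "\<tau> 1 = 1" using ev[OF polyF_1[OF F]] map_hom_1 by simp
  qed
  moreover have "\<forall>x\<in>F. \<tau> x = \<sigma> x"
  proof
    fix x assume x: "x \<in> F"
    have "\<tau> (poly [:x:] \<beta>) = poly (map_poly \<sigma> [:x:]) \<beta>'" using ev polyF_const[OF F x] by blast
    then show "\<tau> x = \<sigma> x" using map_hom_const[OF x] by simp
  qed
  moreover have "\<tau> \<beta> = \<beta>'"
    using ev[OF polyF_X[OF F]] map_hom_X by simp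
  ultimately show ?thesis by blast
qed

lemma extend_hom_ex:
  assumes g: "polyF F g" "g \<noteq> 0" "poly g \<beta> = 0"
  shows "\<exists>\<tau>. hom_on (gen_subfield (F \<union> {\<beta>})) \<tau> \<and> (\<forall>x\<in>F. \<tau> x = \<sigma> x)
            \<and> poly (map_poly \<sigma> g) (\<tau> \<beta>) = 0"
proof -
  obtain m where m: "minpolyF F \<beta> m" using minpolyF_exists[OF F g] by blast
  have mF: "polyF F m" using m unfolding minpolyF_def[OF F] by blast
  have "degree (map_poly \<sigma> m) > 0" using degree_map_hom[OF mF] minpolyF_degree[OF F m] by simp
  then obtain \<beta>' where \<beta>': "poly (map_poly \<sigma> m) \<beta>' = 0"
    using fundamental_theorem_of_algebra constant_degree by (metis neq0_conv)
  have cond: "poly (map_poly \<sigma> h) \<beta>' = 0" if hh: "polyF F h" "poly h \<beta> = 0" for h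
  proof -
    obtain q where q: "polyF F q" "h = q * m" using minpolyF_dvd[OF F m hh] by blast
    then show ?thesis using map_hom_mult[OF q(1) mF] \<beta>' by simp
  qed
  obtain \<tau> where "hom_on (gen_subfield (F \<union> {\<beta>})) \<tau>" "\<forall>x\<in>F. \<tau> x = \<sigma> x" "\<tau> \<beta> = \<beta>'"
    using extend_hom[OF g cond] by blast
  then show ?thesis using cond[OF g(1,3)] by blast
qed

end

section \<open>Radical towers\<close>

definition tw :: "complex list \<Rightarrow> bool" where
  "tw ys \<longleftrightarrow> (\<forall>j<length ys. \<exists>k. k \<ge> 1 \<and> (ys ! j) ^ k \<in> gen_subfield (set (take j ys)))"

definition tower :: "nat \<Rightarrow> complex list \<Rightarrow> bool" where
  "tower N ys \<longleftrightarrow> (\<forall>j<length ys. \<exists>k. k \<ge> 1 \<and> k dvd N \<and> (ys ! j) ^ k \<in> gen_subfield (set (take j ys)))"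

lemma tw_snoc: "tw ys \<Longrightarrow> k \<ge> 1 \<Longrightarrow> y ^ k \<in> gen_subfield (set ys) \<Longrightarrow> tw (ys @ [y])"
  unfolding tw_def
  by (auto simp: nth_append less_Suc_eq)

lemma tw_snocD: 
  assumes "tw (ys @ [y])" shows "tw ys \<and> (\<exists>k\<ge>1. y ^ k \<in> gen_subfield (set ys))"
proof
  show "tw ys" unfolding tw_def
  proof (intro allI impI)
    fix j assume "j < length ys"
    then show "\<exists>k\<ge>1. (ys ! j) ^ k \<in> gen_subfield (set (take j ys))"
      using assms[unfolded tw_def, rule_format, of j] by (simp add: nth_append)
  qed
  show "\<exists>k\<ge>1. y ^ k \<in> gen_subfield (set ys)"
    using assms[unfolded tw_def, rule_format, of "length ys"] by simp
qed

lemma tw_imp_tower: "tw ys \<Longrightarrow> \<exists>N>0. tower N ys"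
proof (induction ys rule: rev_induct)
  case Nil then show ?case by (auto simp: tower_def)
next
  case (snoc y ys)
  obtain N where N: "N > 0" "tower N ys" using snoc tw_snocD by blast
  obtain k where k: "k \<ge> 1" "y ^ k \<in> gen_subfield (set ys)" using tw_snocD[OF snoc.prems] by blast
  have "tower (N * k) (ys @ [y])"
    unfolding tower_def
  proof (intro allI impI)
    fix j assume j: "j < length (ys @ [y])"
    show "\<exists>k'\<ge>1. k' dvd N * k \<and> ((ys @ [y]) ! j) ^ k' \<in> gen_subfield (set (take j (ys @ [y])))"
    proof (cases "j < length ys")
      case True
      then show ?thesis using N(2) unfolding tower_def by (auto simp: nth_append) (meson dvd_mult2)
    next
      case False
      then have "j = length ys" using j by simp
      then show ?thesis using k by (intro exI[of _ k]) auto
    qed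
  qed
  then show ?case using N k by (intro exI[of _ "N * k"]) simp
qed

lemma opnd_in:
  assumes "opnd_ok vs a" "set vs \<subseteq> gen_subfield S" "cnj ` set vs \<subseteq> gen_subfield S"
  shows "opnd_val vs a \<in> gen_subfield S \<and> cnj (opnd_val vs a) \<in> gen_subfield S"
  using assms csubfield_of_int[OF csubfield_gen]
  by (cases a) auto

lemma arith_in:
  assumes "x \<in> gen_subfield S" "y \<in> gen_subfield S" "cnj x \<in> gen_subfield S" "cnj y \<in> gen_subfield S"
  shows "arith_val op x y \<in> gen_subfield S \<and> cnj (arith_val op x y) \<in> gen_subfield S"
  using assms csubfieldD[OF csubfield_gen[of S]] csubfield_diff[OF csubfield_gen[of S]]
    csubfield_divide[OF csubfield_gen[of S]]
  by (cases op) auto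

lemma computes_tower:
  assumes "computes_at vs T x"
  shows "tw ys \<Longrightarrow> set vs \<subseteq> gen_subfield (set ys) \<Longrightarrow> cnj ` set vs \<subseteq> gen_subfield (set ys)
    \<Longrightarrow> \<exists>zs. tw (ys @ zs) \<and> x \<in> gen_subfield (set (ys @ zs))"
  using assms
proof (induction arbitrary: ys rule: computes_at.induct)
  case (arith_here vs a b op T)
  then show ?case using opnd_in[of vs a "set ys"] opnd_in[of vs b "set ys"] arith_in
    by (intro exI[of _ "[]"]) auto
next
  case (arith_later vs a b op T x)
  let ?v = "arith_val op (opnd_val vs a) (opnd_val vs b)"
  have "?v \<in> gen_subfield (set ys) \<and> cnj ?v \<in> gen_subfield (set ys)"
    using arith_later.prems opnd_in[of vs a "set ys"] opnd_in[of vs b "set ys"] arith_later.hyps arith_in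
    by blast
  then show ?case using arith_later.IH[of ys] arith_later.prems by auto
next
  case (root_here vs a k y T)
  have "y ^ k \<in> gen_subfield (set ys)" using root_here opnd_in by metis
  then have "tw (ys @ [y])" using tw_snoc root_here by blast
  then show ?case by (intro exI[of _ "[y]"]) (auto intro: gen_subfield.gen)
next
  case (root_later vs a k y T x)
  have a: "opnd_val vs a \<in> gen_subfield (set ys)" "cnj (opnd_val vs a) \<in> gen_subfield (set ys)"
    using root_later opnd_in by metis+
  have t1: "tw (ys @ [y])" using tw_snoc root_later a by metis
  have "cnj y ^ k \<in> gen_subfield (set ys)" using a root_later by (metis complex_cnj_power)
  then have "cnj y ^ k \<in> gen_subfield (set (ys @ [y]))" using gen_subfield_mono[of "set ys" "set (ys @ [y])"] by auto
  then have t2: "tw (ys @ [y, cnj y])" using tw_snoc[OF t1 root_later.hyps(2)] by simp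
  have sub: "gen_subfield (set ys) \<subseteq> gen_subfield (set (ys @ [y, cnj y]))" by (intro gen_subfield_mono) auto
  have "set (vs @ [y]) \<subseteq> gen_subfield (set (ys @ [y, cnj y]))"
    "cnj ` set (vs @ [y]) \<subseteq> gen_subfield (set (ys @ [y, cnj y]))"
    using root_later.prems sub by (auto intro: gen_subfield.gen)
  then obtain zs where "tw (ys @ [y, cnj y] @ zs)" "x \<in> gen_subfield (set (ys @ [y, cnj y] @ zs))"
    using root_later.IH[OF t2] by auto
  then show ?case by (intro exI[of _ "[y, cnj y] @ zs"]) auto
next
  case (conj_here vs a T)
  then show ?case using opnd_in by (intro exI[of _ "[]"]) auto
next
  case (conj_later vs a T x)
  have a: "opnd_val vs a \<in> gen_subfield (set ys)" "cnj (opnd_val vs a) \<in> gen_subfield (set ys)"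
    using conj_later opnd_in by metis+
  then show ?case using conj_later.IH[of ys] conj_later.prems by auto
next
  case (dec_pos vs a T1 x T2)
  then show ?case by blast
next
  case (dec_nonpos vs a T2 x T1)
  then show ?case by blast
qed

lemma radical_tower:
  assumes "radical_computable \<alpha>"
  shows "\<exists>N zs. N > 0 \<and> tower N zs \<and> \<alpha> \<in> gen_subfield (set zs)"
proof -
  obtain T where "computes_at [] T \<alpha>" using assms unfolding radical_computable_def by blast
  then obtain zs where "tw zs" "\<alpha> \<in> gen_subfield (set zs)"
    using computes_tower[of "[]" T \<alpha> "[]"] by (auto simp: tw_def)
  then show ?thesis using tw_imp_tower by blast
qed

lemma tower_append: "tower N xs \<Longrightarrow> tower N ys \<Longrightarrow> tower N (xs @ ys)"
  unfolding tower_def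
proof (intro allI impI)
  fix j assume xs: "\<forall>j<length xs. \<exists>k\<ge>1. k dvd N \<and> (xs ! j) ^ k \<in> gen_subfield (set (take j xs))"
    and ys: "\<forall>j<length ys. \<exists>k\<ge>1. k dvd N \<and> (ys ! j) ^ k \<in> gen_subfield (set (take j ys))"
    and j: "j < length (xs @ ys)"
  show "\<exists>k\<ge>1. k dvd N \<and> ((xs @ ys) ! j) ^ k \<in> gen_subfield (set (take j (xs @ ys)))"
  proof (cases "j < length xs")
    case True then show ?thesis using xs by (auto simp: nth_append)
  next
    case False
    then obtain k where k: "k \<ge> 1" "k dvd N" "(ys ! (j - length xs)) ^ k \<in> gen_subfield (set (take (j - length xs) ys))"
      using ys j by (metis add_diff_inverse_nat length_append nat_add_left_cancel_less)
    have "gen_subfield (set (take (j - length xs) ys)) \<subseteq> gen_subfield (set (take j (xs @ ys)))"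
      using False by (intro gen_subfield_mono) auto
    then show ?thesis using k False by (auto simp: nth_append)
  qed
qed

lemma tower_map:
  assumes L: "csubfield L" and f: "hom_on L f" and sub: "set zs \<subseteq> L" and t: "tower N zs"
  shows "tower N (map f zs)"
  unfolding tower_def
proof (intro allI impI)
  fix j assume j: "j < length (map f zs)"
  obtain k where k: "k \<ge> 1" "k dvd N" "(zs ! j) ^ k \<in> gen_subfield (set (take j zs))"
    using t j unfolding tower_def by auto
  have G: "gen_subfield (set (take j zs)) \<subseteq> L"
    using sub by (intro gen_subfield_least L) (meson order.trans set_take_subset)
  have zj: "zs ! j \<in> L" using sub j by auto
  have "f ((zs ! j) ^ k) \<in> f ` gen_subfield (set (take j zs))" using k by blast
  also have "\<dots> = gen_subfield (f ` set (take j zs))" using hom_gen_image[OF L f G] .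
  finally show "\<exists>k\<ge>1. k dvd N \<and> (map f zs ! j) ^ k \<in> gen_subfield (set (take j (map f zs)))"
    using k j hom_power[OF L f zj] by (auto simp: take_map)
qed

lemma extend_along:
  assumes F: "csubfield F" and \<sigma>: "hom_on F \<sigma>"
  shows "(\<forall>j<length zs. \<exists>k\<ge>1. (zs ! j) ^ k \<in> gen_subfield (F \<union> set (take j zs)))
     \<Longrightarrow> \<exists>\<tau>. hom_on (gen_subfield (F \<union> set zs)) \<tau> \<and> (\<forall>x\<in>F. \<tau> x = \<sigma> x)"
proof (induction zs rule: rev_induct)
  case Nil
  then show ?case using gen_subfield_idem[OF F] \<sigma> by (intro exI[of _ \<sigma>]) auto
next
  case (snoc y ys)
  have "\<forall>j<length ys. \<exists>k\<ge>1. (ys ! j) ^ k \<in> gen_subfield (F \<union> set (take j ys))"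
    using snoc.prems by (auto simp: nth_append) (metis less_SucI)
  then obtain \<tau> where \<tau>: "hom_on (gen_subfield (F \<union> set ys)) \<tau>" "\<forall>x\<in>F. \<tau> x = \<sigma> x"
    using snoc.IH by blast
  obtain k where k: "k \<ge> 1" "y ^ k \<in> gen_subfield (F \<union> set ys)"
    using snoc.prems[rule_format, of "length ys"] by auto
  define F' where "F' = gen_subfield (F \<union> set ys)"
  have F': "csubfield F'" unfolding F'_def by (rule csubfield_gen)
  define g where "g = monom 1 k - [:y ^ k:]"
  have gF: "polyF F' g" unfolding g_def
    using k F' by (intro polyF_diff polyF_monom polyF_const) (auto simp: F'_def csubfieldD)
  have "coeff g k = 1" using k by (simp add: g_def coeff_pCons split: nat.split)
  then have g0: "g \<noteq> 0" by auto
  have gy: "poly g y = 0" by (simp add: g_def poly_monom)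
  obtain \<tau>' where \<tau>': "hom_on (gen_subfield (F' \<union> {y})) \<tau>'" "\<forall>x\<in>F'. \<tau>' x = \<tau> x"
    using extend_hom_ex[OF F' \<tau>(1)[folded F'_def] gF g0 gy] by blast
  have "gen_subfield (F' \<union> {y}) = gen_subfield (F \<union> set (ys @ [y]))"
    unfolding F'_def gen_subfield_Un_gen by (simp add: Un_assoc)
  moreover have "\<forall>x\<in>F. \<tau>' x = \<sigma> x" using \<tau>'(2) \<tau>(2) gen_subfield_sub[of "F \<union> set ys"] by (auto simp: F'_def)
  ultimately show ?case using \<tau>'(1) by auto
qed

lemma csubfield_Rats_set: "csubfield (\<rat> :: complex set)"
  unfolding csubfield_def by (auto intro: Rats_add Rats_mult Rats_minus_iff Rats_inverse)

lemma hom_on_id: "hom_on L id"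
  by (simp add: hom_on_def)

lemma map_of_rat_mult: "map_poly (of_rat :: rat \<Rightarrow> complex) (a * b) = map_poly of_rat a * map_poly of_rat b"
  by (rule poly_eqI) (simp add: coeff_map_poly coeff_mult of_rat_sum of_rat_mult)

lemma map_of_rat_inj: "map_poly (of_rat :: rat \<Rightarrow> complex) a = map_poly of_rat b \<Longrightarrow> a = b"
  by (rule poly_eqI) (metis coeff_map_poly of_rat_0 of_rat_eq_iff)

lemma degree_map_of_rat: "degree (map_poly (of_rat :: rat \<Rightarrow> complex) a) = degree a"
  by (simp add: degree_map_poly)

lemma polyF_map_of_rat: "polyF \<rat> (map_poly (of_rat :: rat \<Rightarrow> complex) a)"
  by (simp add: polyF_def coeff_map_poly)

lemma conj_roots_hom:
  assumes irr: "irreducible p" and a: "poly (map_poly of_rat p) \<alpha> = 0"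
    and a': "poly (map_poly of_rat p) \<alpha>' = 0"
  shows "\<exists>\<sigma>. hom_on (gen_subfield (\<rat> \<union> {\<alpha>})) \<sigma> \<and> \<sigma> \<alpha> = \<alpha>'"
proof -
  have Q: "csubfield (\<rat> :: complex set)" by (rule csubfield_Rats_set)
  define g where "g = (map_poly of_rat p :: complex poly)"
  have p0: "p \<noteq> 0" using irr by auto
  have gF: "polyF \<rat> g" "g \<noteq> 0" "poly g \<alpha> = 0" using p0 a map_of_rat_inj[of p 0] by (auto simp: g_def polyF_map_of_rat)
  obtain m where m: "minpolyF \<rat> \<alpha> m" using minpolyF_exists[OF Q gF] by blast
  have mF: "polyF \<rat> m" "m \<noteq> 0" "poly m \<alpha> = 0" using m unfolding minpolyF_def[OF Q] by auto
  obtain q where q: "polyF \<rat> q" "g = q * m" using minpolyF_dvd[OF Q m gF(1,3)] by blast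
  obtain m0 where m0: "m = map_poly of_rat m0" using mF(1) ratpolyE unfolding polyF_def by blast
  obtain q0 where q0: "q = map_poly of_rat q0" using q(1) ratpolyE unfolding polyF_def by blast
  have "p = q0 * m0" using q(2) unfolding g_def m0 q0 map_of_rat_mult[symmetric] by (rule map_of_rat_inj)
  then have "q0 dvd 1 \<or> m0 dvd 1" using irr irreducibleD by blast
  moreover have "\<not> m0 dvd 1"
  proof
    assume "m0 dvd 1"
    moreover have "m0 \<noteq> 0" using mF(2) m0 by auto
    ultimately have "degree m0 = 0" using is_unit_iff_degree by blast
    then show False using minpolyF_degree[OF Q m] m0 degree_map_of_rat by simp
  qed
  ultimately have "q0 dvd 1" by blast
  then obtain c where c0: "q0 = [:c:]" "c dvd 1" using is_unit_poly_iff[of q0] by blast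
  then have c: "q0 = [:c:]" "c \<noteq> 0" by auto
  have "poly g \<alpha>' = 0" using a' g_def by simp
  moreover have "poly q \<alpha>' = of_rat c" using q0 c(1) by (simp add: map_poly_pCons)
  ultimately have m\<alpha>': "poly m \<alpha>' = 0" using q(2) c(2) by simp
  have cond: "poly (map_poly id h) \<alpha>' = 0" if hh: "polyF \<rat> h" "poly h \<alpha> = 0" for h
  proof -
    obtain q' where "polyF \<rat> q'" "h = q' * m" using minpolyF_dvd[OF Q m hh] by blast
    then show ?thesis using m\<alpha>' by simp
  qed
  obtain \<tau> where "hom_on (gen_subfield (\<rat> \<union> {\<alpha>})) \<tau>" "\<tau> \<alpha> = \<alpha>'"
    using extend_hom[OF Q hom_on_id gF cond] by blast
  then show ?thesis by blast
qed

lemma all_roots_tower: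
  assumes rc: "radical_computable \<alpha>" and irr: "irreducible p" and a: "poly (map_poly of_rat p) \<alpha> = 0"
  shows "\<exists>N zs. N > 0 \<and> tower N zs \<and> {z. poly (map_poly of_rat p) z = 0} \<subseteq> gen_subfield (set zs)"
proof -
  obtain N zs0 where N: "N > 0" "tower N zs0" "\<alpha> \<in> gen_subfield (set zs0)"
    using radical_tower[OF rc] by blast
  define R where "R = {z::complex. poly (map_poly of_rat p) z = 0}"
  have each: "\<exists>zs. tower N zs \<and> \<alpha>' \<in> gen_subfield (set zs)" if a'R: "\<alpha>' \<in> R" for \<alpha>'
  proof -
    define F where "F = gen_subfield (\<rat> \<union> {\<alpha>})"
    have F: "csubfield F" unfolding F_def by (rule csubfield_gen)
    obtain \<sigma> where \<sigma>: "hom_on F \<sigma>" "\<sigma> \<alpha> = \<alpha>'"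
      using conj_roots_hom[OF irr a, of \<alpha>'] a'R unfolding R_def F_def by auto
    have pre: "\<forall>j<length zs0. \<exists>k\<ge>1. (zs0 ! j) ^ k \<in> gen_subfield (F \<union> set (take j zs0))"
    proof (intro allI impI)
      fix j assume j: "j < length zs0"
      obtain k where k: "k \<ge> 1" "(zs0 ! j) ^ k \<in> gen_subfield (set (take j zs0))"
        using N(2) j unfolding tower_def by blast
      have "gen_subfield (set (take j zs0)) \<subseteq> gen_subfield (F \<union> set (take j zs0))"
        by (rule gen_subfield_mono) blast
      then show "\<exists>k\<ge>1. (zs0 ! j) ^ k \<in> gen_subfield (F \<union> set (take j zs0))" using k by blast
    qed
    obtain \<tau> where \<tau>: "hom_on (gen_subfield (F \<union> set zs0)) \<tau>" "\<forall>x\<in>F. \<tau> x = \<sigma> x"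
      using extend_along[OF F \<sigma>(1) pre] by blast
    define L where "L = gen_subfield (F \<union> set zs0)"
    have L: "csubfield L" unfolding L_def by (rule csubfield_gen)
    have sub: "set zs0 \<subseteq> L" unfolding L_def using gen_subfield_sub by blast
    have aF: "\<alpha> \<in> F" unfolding F_def by (simp add: gen_subfield.gen)
    have G: "gen_subfield (set zs0) \<subseteq> L" using sub by (intro gen_subfield_least L)
    have "\<tau> \<alpha> = \<alpha>'" using \<tau>(2) aF \<sigma>(2) by auto
    then have "\<alpha>' \<in> \<tau> ` gen_subfield (set zs0)" using N(3) by blast
    also have "\<dots> = gen_subfield (set (map \<tau> zs0))"
      using hom_gen_image[OF L \<tau>(1)[folded L_def] G] by simp
    finally show ?thesis using tower_map[OF L \<tau>(1)[folded L_def] sub N(2)] by blast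
  qed
  have fin: "finite R" unfolding R_def using irr
    by (intro poly_roots_finite) (use map_of_rat_inj[of p 0] in auto)
  have ind: "S \<subseteq> R \<Longrightarrow> \<exists>zs. tower N zs \<and> S \<subseteq> gen_subfield (set zs)" if "finite S" for S
    using that
  proof (induction S rule: finite_induct)
    case empty then show ?case by (intro exI[of _ "[]"]) (auto simp: tower_def)
  next
    case (insert x S)
    obtain zs where zs: "tower N zs" "S \<subseteq> gen_subfield (set zs)" using insert by auto
    obtain ys where ys: "tower N ys" "x \<in> gen_subfield (set ys)" using each insert.prems by auto
    have "gen_subfield (set zs) \<subseteq> gen_subfield (set (zs @ ys))" "gen_subfield (set ys) \<subseteq> gen_subfield (set (zs @ ys))"
      by (simp_all add: gen_subfield_mono)
    then show ?case using zs ys tower_append by (intro exI[of _ "zs @ ys"]) auto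
  qed
  obtain zs where "tower N zs" "R \<subseteq> gen_subfield (set zs)" using ind[OF fin] by blast
  then show ?thesis using N(1) unfolding R_def by blast
qed

definition aut :: "complex set \<Rightarrow> complex set \<Rightarrow> (complex \<Rightarrow> complex) \<Rightarrow> bool" where
  "aut L F \<rho> \<longleftrightarrow> bij_betw \<rho> L L \<and> hom_on L \<rho> \<and> (\<forall>x\<in>F. \<rho> x = x)"

definition restr :: "complex set \<Rightarrow> (complex \<Rightarrow> complex) \<Rightarrow> complex \<Rightarrow> complex" where
  "restr K \<rho> = (\<lambda>x. if x \<in> K then \<rho> x else x)"

lemma aut_id: "aut L F id"
  by (simp add: aut_def hom_on_def)

lemma aut_comp: assumes "aut L F \<rho>" "aut L F \<tau>" shows "aut L F (\<rho> \<circ> \<tau>)"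
proof -
  have b: "bij_betw (\<rho> \<circ> \<tau>) L L" using assms unfolding aut_def by (meson bij_betw_trans)
  have m: "\<tau> x \<in> L" if "x \<in> L" for x using assms(2) that unfolding aut_def bij_betw_def by blast
  have "hom_on L (\<rho> \<circ> \<tau>)" using assms m unfolding aut_def hom_on_def by simp
  then show ?thesis using b assms unfolding aut_def by simp
qed

lemma aut_mem: "aut L F \<rho> \<Longrightarrow> x \<in> L \<Longrightarrow> \<rho> x \<in> L"
  unfolding aut_def bij_betw_def by blast

lemma aut_inv:
  assumes L: "csubfield L" and FL: "F \<subseteq> L" and \<rho>: "aut L F \<rho>"
  shows "aut L F (inv_into L \<rho>)" "\<And>x. x \<in> L \<Longrightarrow> \<rho> (inv_into L \<rho> x) = x"
    "\<And>x. x \<in> L \<Longrightarrow> inv_into L \<rho> (\<rho> x) = x"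
proof -
  have b: "bij_betw \<rho> L L" and h: "hom_on L \<rho>" and fx: "\<forall>x\<in>F. \<rho> x = x" using \<rho> unfolding aut_def by auto
  have inj: "inj_on \<rho> L" using b by (simp add: bij_betw_def)
  show fi: "\<rho> (inv_into L \<rho> x) = x" if "x \<in> L" for x
    using b that by (simp add: bij_betw_def f_inv_into_f)
  show ii: "inv_into L \<rho> (\<rho> x) = x" if "x \<in> L" for x
    using inj that by simp
  have im: "inv_into L \<rho> x \<in> L" if "x \<in> L" for x
    using b that by (simp add: bij_betw_def inv_into_into)
  have bi: "bij_betw (inv_into L \<rho>) L L" using b by (rule bij_betw_inv_into)
  have "hom_on L (inv_into L \<rho>)"
    unfolding hom_on_def
  proof (intro conjI ballI)
    fix x y assume x: "x \<in> L" and y: "y \<in> L"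
    let ?u = "inv_into L \<rho> x" and ?v = "inv_into L \<rho> y"
    have "\<rho> (?u + ?v) = x + y" using hom_add[OF L h im[OF x] im[OF y]] fi x y by simp
    then show "inv_into L \<rho> (x + y) = ?u + ?v"
      using ii[of "?u + ?v"] csubfieldD(3)[OF L im[OF x] im[OF y]] by simp
    have "\<rho> (?u * ?v) = x * y" using hom_mult[OF L h im[OF x] im[OF y]] fi x y by simp
    then show "inv_into L \<rho> (x * y) = ?u * ?v"
      using ii[of "?u * ?v"] csubfieldD(4)[OF L im[OF x] im[OF y]] by simp
  next
    show "inv_into L \<rho> 1 = 1" using ii[OF csubfieldD(2)[OF L]] hom_one[OF L h] by simp
  qed
  moreover have "\<forall>x\<in>F. inv_into L \<rho> x = x" using fx ii FL by (metis subsetD)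
  ultimately show "aut L F (inv_into L \<rho>)" using bi by (simp add: aut_def)
qed

lemma aut_cong: assumes a: "aut L F \<rho>" and FL: "F \<subseteq> L" and L: "csubfield L"
  and eq: "\<And>x. x \<in> L \<Longrightarrow> \<rho>' x = \<rho> x" shows "aut L F \<rho>'"
proof -
  have "bij_betw \<rho> L L" using a unfolding aut_def by blast
  moreover have "\<forall>x\<in>L. \<rho>' x = \<rho> x" using eq by blast
  ultimately have "bij_betw \<rho>' L L" using bij_betw_cong[of L \<rho>' \<rho> L] by blast
  moreover have "hom_on L \<rho>'"
    unfolding hom_on_def
  proof (intro conjI ballI)
    have h: "hom_on L \<rho>" using a unfolding aut_def by blast
    fix x y assume x: "x \<in> L" and y: "y \<in> L"
    show "\<rho>' (x + y) = \<rho>' x + \<rho>' y"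
      using eq[OF x] eq[OF y] eq[OF csubfieldD(3)[OF L x y]] hom_add[OF L h x y] by simp
    show "\<rho>' (x * y) = \<rho>' x * \<rho>' y"
      using eq[OF x] eq[OF y] eq[OF csubfieldD(4)[OF L x y]] hom_mult[OF L h x y] by simp
  next
    have h: "hom_on L \<rho>" using a unfolding aut_def by blast
    show "\<rho>' 1 = 1" using eq[OF csubfieldD(2)[OF L]] hom_one[OF L h] by simp
  qed
  moreover have "\<forall>x\<in>F. \<rho>' x = x"
  proof
    fix x assume x: "x \<in> F"
    then have "\<rho> x = x" using a unfolding aut_def by blast
    moreover have "x \<in> L" using x FL by blast
    ultimately show "\<rho>' x = x" using eq[of x] by simp
  qed
  ultimately show ?thesis unfolding aut_def by blast
qed

lemma restr_comp: "(\<And>x. x \<in> K \<Longrightarrow> \<tau> x \<in> K) \<Longrightarrow> restr K (\<rho> \<circ> \<tau>) = restr K \<rho> \<circ> restr K \<tau>"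
  unfolding restr_def by auto

lemma gal_auts_iff:
  assumes K: "csubfield K"
  shows "\<sigma> \<in> gal_auts K \<longleftrightarrow> aut K \<rat> \<sigma> \<and> (\<forall>x. x \<notin> K \<longrightarrow> \<sigma> x = x)"
proof
  assume s: "\<sigma> \<in> gal_auts K"
  have "\<sigma> (of_rat 1) = of_rat 1" using s unfolding gal_auts_def by blast
  then have "\<sigma> 1 = 1" by simp
  then show "aut K \<rat> \<sigma> \<and> (\<forall>x. x \<notin> K \<longrightarrow> \<sigma> x = x)"
    using s unfolding gal_auts_def aut_def hom_on_def by (auto elim: Rats_cases)
next
  assume s: "aut K \<rat> \<sigma> \<and> (\<forall>x. x \<notin> K \<longrightarrow> \<sigma> x = x)"
  then have "\<forall>q. \<sigma> (of_rat q) = of_rat q" unfolding aut_def by auto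
  then show "\<sigma> \<in> gal_auts K"
    using s unfolding gal_auts_def aut_def hom_on_def by auto
qed

lemma restr_gal:
  assumes K: "csubfield K" and a: "aut K \<rat> \<rho>"
  shows "restr K \<rho> \<in> gal_auts K"
  unfolding gal_auts_iff[OF K]
  using aut_cong[OF a csubfield_Rats[OF K] K, of "restr K \<rho>"] by (auto simp: restr_def)

lemma aut_shrink:
  assumes L: "csubfield L" and KL: "K \<subseteq> L" and a: "aut L F \<rho>" and im: "\<rho> ` K = K" and K: "csubfield K"
  shows "aut K \<rat> \<rho>"
proof -
  have h: "hom_on L \<rho>" using a unfolding aut_def by blast
  have "inj_on \<rho> K" using hom_inj_on[OF L h] KL by (rule inj_on_subset)
  then have "bij_betw \<rho> K K" using im by (simp add: bij_betw_def)
  moreover have "hom_on K \<rho>" using hom_on_subset[OF h KL] .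
  moreover have "\<forall>x\<in>\<rat>. \<rho> x = x" using hom_of_rat[OF L h] by (auto elim: Rats_cases)
  ultimately show ?thesis by (simp add: aut_def)
qed

lemma hom_roots_image:
  assumes L: "csubfield L" and h: "hom_on L \<rho>" and P0: "P \<noteq> 0"
    and RL: "{z. poly (map_poly of_rat P) z = 0} \<subseteq> L"
  shows "\<rho> ` gen_subfield {z. poly (map_poly of_rat P) z = 0} = gen_subfield {z. poly (map_poly of_rat P) z = 0}"
proof -
  define R where "R = {z::complex. poly (map_poly of_rat P) z = 0}"
  have "map_poly (of_rat :: rat \<Rightarrow> complex) P \<noteq> 0" using P0 map_of_rat_inj[of P 0] by auto
  then have fin: "finite R" unfolding R_def by (rule poly_roots_finite)
  have "\<rho> ` R \<subseteq> R"
  proof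
    fix y assume "y \<in> \<rho> ` R"
    then obtain x where x: "x \<in> R" "y = \<rho> x" by auto
    have "poly (map_poly of_rat P) (\<rho> x) = \<rho> (poly (map_poly of_rat P) x)"
      using hom_poly_rat[OF L h, of x P] x RL unfolding R_def by auto
    then show "y \<in> R" using x hom_zero[OF L h] unfolding R_def by simp
  qed
  moreover have "inj_on \<rho> R" using hom_inj_on[OF L h] RL unfolding R_def by (rule inj_on_subset)
  ultimately have "\<rho> ` R = R" using fin by (simp add: endo_inj_surj)
  moreover have "gen_subfield R \<subseteq> L" using RL unfolding R_def by (intro gen_subfield_least L)
  ultimately show ?thesis using hom_gen_image[OF L h] unfolding R_def by metis
qed

lemma Gal_group:
  assumes K: "csubfield K"
  shows "group (Gal K)"
proof (rule groupI)
  fix x y assume x: "x \<in> carrier (Gal K)" and y: "y \<in> carrier (Gal K)"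
  then have "x \<in> gal_auts K" "y \<in> gal_auts K" by (simp_all add: Gal_def)
  then have ax: "aut K \<rat> x" "\<forall>z. z \<notin> K \<longrightarrow> x z = z" and ay: "aut K \<rat> y" "\<forall>z. z \<notin> K \<longrightarrow> y z = z"
    using gal_auts_iff[OF K] by blast+
  have "aut K \<rat> (x \<circ> y)" by (rule aut_comp[OF ax(1) ay(1)])
  moreover have "\<forall>z. z \<notin> K \<longrightarrow> (x \<circ> y) z = z" using ax(2) ay(2) by simp
  ultimately have "x \<circ> y \<in> gal_auts K" using gal_auts_iff[OF K] by blast
  then show "x \<otimes>\<^bsub>Gal K\<^esub> y \<in> carrier (Gal K)" by (simp add: Gal_def)
next
  have "id \<in> gal_auts K" using gal_auts_iff[OF K] aut_id by simp
  then show "\<one>\<^bsub>Gal K\<^esub> \<in> carrier (Gal K)" by (simp add: Gal_def)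
next
  fix x y z show "x \<otimes>\<^bsub>Gal K\<^esub> y \<otimes>\<^bsub>Gal K\<^esub> z = x \<otimes>\<^bsub>Gal K\<^esub> (y \<otimes>\<^bsub>Gal K\<^esub> z)"
    by (simp add: Gal_def o_assoc)
next
  fix x show "\<one>\<^bsub>Gal K\<^esub> \<otimes>\<^bsub>Gal K\<^esub> x = x" by (simp add: Gal_def)
next
  fix x assume x: "x \<in> carrier (Gal K)"
  then have "x \<in> gal_auts K" by (simp add: Gal_def)
  then have ax: "aut K \<rat> x" and out: "\<forall>z. z \<notin> K \<longrightarrow> x z = z"
    using gal_auts_iff[OF K] by blast+
  have QK: "\<rat> \<subseteq> K" using csubfield_Rats[OF K] .
  define y where "y = restr K (inv_into K x)"
  have "y \<in> gal_auts K" unfolding y_def using aut_inv(1)[OF K QK ax] by (rule restr_gal[OF K])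
  moreover have "y \<circ> x = id"
  proof
    fix z show "(y \<circ> x) z = id z"
    proof (cases "z \<in> K")
      case True then show ?thesis using aut_inv(3)[OF K QK ax] aut_mem[OF ax] by (simp add: y_def restr_def)
    next
      case False then show ?thesis using out by (simp add: y_def restr_def)
    qed
  qed
  ultimately show "\<exists>y\<in>carrier (Gal K). y \<otimes>\<^bsub>Gal K\<^esub> x = \<one>\<^bsub>Gal K\<^esub>"
    unfolding Gal_def by (intro bexI[of _ y]) simp_all
qed

lemma zeta_pow: "N > 0 \<Longrightarrow> cis (2 * pi / real N) ^ N = 1"
  by (simp add: DeMoivre)

lemma root_unity_pow:
  assumes N: "N > 0" and z: "z ^ N = 1"
  shows "\<exists>t. z = cis (2 * pi / real N) ^ t"
proof -
  have "z \<in> (\<lambda>k. cis (2 * pi * real k / real N)) ` {..<N}"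
    using bij_betw_roots_unity[OF N] z unfolding bij_betw_def by auto
  then obtain k where "z = cis (2 * pi * real k / real N)" by auto
  then have "z = cis (2 * pi / real N) ^ k" by (simp add: DeMoivre mult.commute)
  then show ?thesis by blast
qed

lemma ext_bij:
  assumes Kp: "csubfield Kp" and \<rho>: "aut Kp F \<rho>" and h: "hom_on (gen_subfield (Kp \<union> {\<beta>})) \<rho>'"
    and ext: "\<And>x. x \<in> Kp \<Longrightarrow> \<rho>' x = \<rho> x"
    and im: "\<rho>' \<beta> \<in> gen_subfield (Kp \<union> {\<beta>})" and bk: "\<beta> \<in> gen_subfield (Kp \<union> {\<rho>' \<beta>})"
  shows "bij_betw \<rho>' (gen_subfield (Kp \<union> {\<beta>})) (gen_subfield (Kp \<union> {\<beta>}))"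
proof -
  let ?Kn = "gen_subfield (Kp \<union> {\<beta>})"
  have Kn: "csubfield ?Kn" by (rule csubfield_gen)
  have "\<rho>' ` Kp = \<rho> ` Kp" using ext by (simp add: image_def)
  also have "\<dots> = Kp" using \<rho> unfolding aut_def bij_betw_def by blast
  finally have imK: "\<rho>' ` Kp = Kp" .
  have "\<rho>' ` ?Kn = gen_subfield (\<rho>' ` (Kp \<union> {\<beta>}))"
    by (rule hom_gen_image[OF Kn h]) simp
  also have "\<dots> = gen_subfield (Kp \<union> {\<rho>' \<beta>})" using imK by (simp add: image_Un)
  finally have eq: "\<rho>' ` ?Kn = gen_subfield (Kp \<union> {\<rho>' \<beta>})" .
  have "gen_subfield (Kp \<union> {\<rho>' \<beta>}) \<subseteq> ?Kn"
    using im gen_subfield_sub[of "Kp \<union> {\<beta>}"] by (intro gen_subfield_least Kn) auto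
  moreover have "?Kn \<subseteq> gen_subfield (Kp \<union> {\<rho>' \<beta>})"
    using bk gen_subfield_sub[of "Kp \<union> {\<rho>' \<beta>}"] by (intro gen_subfield_least csubfield_gen) auto
  ultimately have "\<rho>' ` ?Kn = ?Kn" using eq by blast
  then show ?thesis using hom_inj_on[OF Kn h] by (simp add: bij_betw_def)
qed

lemma hom_fix_gen_empty:
  assumes L: "csubfield L" and h: "hom_on L \<rho>" and x: "x \<in> gen_subfield {}"
  shows "\<rho> x = x"
proof -
  have "gen_subfield {} \<subseteq> L" by (intro gen_subfield_least L) simp
  then show ?thesis using hom_agree_gen[OF L h hom_on_id, of "{}" x] x by simp
qed

lemma aut_restr_K:
  assumes L: "csubfield L" and KL: "K \<subseteq> L" and K: "csubfield K" and a: "aut L F \<rho>" and im: "\<rho> ` K = K"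
  shows "restr K \<rho> \<in> carrier (Gal K)"
  using restr_gal[OF K aut_shrink[OF L KL a im K]] by (simp add: Gal_def)

lemma Gal_inv:
  assumes L: "csubfield L" and KL: "K \<subseteq> L" and K: "csubfield K" and FL: "F \<subseteq> L"
    and a: "aut L F \<rho>" and im: "\<rho> ` K = K"
  shows "inv\<^bsub>Gal K\<^esub> (restr K \<rho>) = restr K (inv_into L \<rho>)"
proof -
  interpret group "Gal K" by (rule Gal_group[OF K])
  have a': "aut L F (inv_into L \<rho>)" using aut_inv(1)[OF L FL a] .
  have im': "inv_into L \<rho> ` K = K"
  proof -
    have "inv_into L \<rho> ` (\<rho> ` K) = K" using aut_inv(3)[OF L FL a] KL by (auto simp: image_iff) (metis subsetD)+
    then show ?thesis using im by simp
  qed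
  have "restr K (inv_into L \<rho>) \<otimes>\<^bsub>Gal K\<^esub> restr K \<rho> = \<one>\<^bsub>Gal K\<^esub>"
  proof -
    have "restr K (inv_into L \<rho>) \<circ> restr K \<rho> = id"
    proof
      fix z show "(restr K (inv_into L \<rho>) \<circ> restr K \<rho>) z = id z"
      proof (cases "z \<in> K")
        case True
        then have "\<rho> z \<in> K" using im by blast
        then show ?thesis using True aut_inv(3)[OF L FL a, of z] KL by (auto simp: restr_def)
      qed (simp add: restr_def)
    qed
    then show ?thesis by (simp add: Gal_def)
  qed
  then show ?thesis
    using inv_equality aut_restr_K[OF L KL K a im] aut_restr_K[OF L KL K a' im'] by blast
qed

lemma comm_step:
  assumes Kp: "csubfield Kp" and FKp: "Fp \<subseteq> Kp" and K: "csubfield K" and KKp: "K \<subseteq> Kp"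
    and Kim: "\<And>L \<rho>. csubfield L \<Longrightarrow> K \<subseteq> L \<Longrightarrow> hom_on L \<rho> \<Longrightarrow> \<rho> ` K = K"
    and Ext: "\<And>\<rho>. aut Kp Fp \<rho> \<Longrightarrow> \<exists>\<rho>'. aut (gen_subfield (Kp \<union> {\<beta>})) Fp \<rho>' \<and> (\<forall>x\<in>Kp. \<rho>' x = \<rho> x)"
    and Comm: "\<And>\<sigma>1 \<sigma>2. aut (gen_subfield (Kp \<union> {\<beta>})) Fp \<sigma>1 \<Longrightarrow> aut (gen_subfield (Kp \<union> {\<beta>})) Fp \<sigma>2
        \<Longrightarrow> \<sigma>1 (\<sigma>2 \<beta>) = \<sigma>2 (\<sigma>1 \<beta>)"
    and x: "x = restr K \<rho>" "aut Kp Fp \<rho>" and y: "y = restr K \<tau>" "aut Kp Fp \<tau>"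
  shows "\<exists>c. aut (gen_subfield (Kp \<union> {\<beta>})) (gen_subfield (Fp \<union> {\<beta>})) c \<and>
     x \<otimes>\<^bsub>Gal K\<^esub> y \<otimes>\<^bsub>Gal K\<^esub> inv\<^bsub>Gal K\<^esub> x \<otimes>\<^bsub>Gal K\<^esub> inv\<^bsub>Gal K\<^esub> y = restr K c"
proof -
  define Kn where "Kn = gen_subfield (Kp \<union> {\<beta>})"
  have Kn: "csubfield Kn" unfolding Kn_def by (rule csubfield_gen)
  have KpKn: "Kp \<subseteq> Kn" unfolding Kn_def using gen_subfield_sub by blast
  have bKn: "\<beta> \<in> Kn" unfolding Kn_def using gen_subfield_sub by blast
  have KKn: "K \<subseteq> Kn" using KKp KpKn by blast
  have FKn: "Fp \<subseteq> Kn" using FKp KpKn by blast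
  obtain \<rho>1 where \<rho>1: "aut Kn Fp \<rho>1" "\<forall>z\<in>Kp. \<rho>1 z = \<rho> z" using Ext[OF x(2)] unfolding Kn_def by blast
  obtain \<tau>1 where \<tau>1: "aut Kn Fp \<tau>1" "\<forall>z\<in>Kp. \<tau>1 z = \<tau> z" using Ext[OF y(2)] unfolding Kn_def by blast
  have hom: "hom_on Kn f" if "aut Kn Fp f" for f using that unfolding aut_def by blast
  have imK: "f ` K = K" if "aut Kn Fp f" for f using Kim[OF Kn KKn hom[OF that]] .
  have memK: "f z \<in> K" if "aut Kn Fp f" "z \<in> K" for f z using imK[OF that(1)] that(2) by blast
  define \<rho>2 where "\<rho>2 = inv_into Kn \<rho>1"
  define \<tau>2 where "\<tau>2 = inv_into Kn \<tau>1"
  have \<rho>2: "aut Kn Fp \<rho>2" unfolding \<rho>2_def using aut_inv(1)[OF Kn FKn \<rho>1(1)] .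
  have \<tau>2: "aut Kn Fp \<tau>2" unfolding \<tau>2_def using aut_inv(1)[OF Kn FKn \<tau>1(1)] .
  have xr: "x = restr K \<rho>1" unfolding x(1) restr_def using \<rho>1(2) KKp by (auto simp: fun_eq_iff)
  have yr: "y = restr K \<tau>1" unfolding y(1) restr_def using \<tau>1(2) KKp by (auto simp: fun_eq_iff)
  have ix: "inv\<^bsub>Gal K\<^esub> x = restr K \<rho>2"
    unfolding xr \<rho>2_def by (rule Gal_inv[OF Kn KKn K FKn \<rho>1(1) imK[OF \<rho>1(1)]])
  have iy: "inv\<^bsub>Gal K\<^esub> y = restr K \<tau>2"
    unfolding yr \<tau>2_def by (rule Gal_inv[OF Kn KKn K FKn \<tau>1(1) imK[OF \<tau>1(1)]])
  define c where "c = \<rho>1 \<circ> \<tau>1 \<circ> \<rho>2 \<circ> \<tau>2"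
  have ac: "aut Kn Fp c" unfolding c_def using \<rho>1(1) \<tau>1(1) \<rho>2 \<tau>2 by (intro aut_comp)
  have "x \<otimes>\<^bsub>Gal K\<^esub> y \<otimes>\<^bsub>Gal K\<^esub> inv\<^bsub>Gal K\<^esub> x \<otimes>\<^bsub>Gal K\<^esub> inv\<^bsub>Gal K\<^esub> y
      = restr K \<rho>1 \<circ> restr K \<tau>1 \<circ> restr K \<rho>2 \<circ> restr K \<tau>2"
    unfolding ix iy by (simp add: Gal_def xr yr)
  also have "\<dots> = restr K c"
    unfolding c_def using memK \<rho>1(1) \<tau>1(1) \<rho>2 \<tau>2 aut_comp
    by (simp add: restr_comp[symmetric])
  finally have eq: "x \<otimes>\<^bsub>Gal K\<^esub> y \<otimes>\<^bsub>Gal K\<^esub> inv\<^bsub>Gal K\<^esub> x \<otimes>\<^bsub>Gal K\<^esub> inv\<^bsub>Gal K\<^esub> y = restr K c" .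
  have "\<rho>2 (\<tau>2 \<beta>) = \<tau>2 (\<rho>2 \<beta>)" using Comm[OF \<rho>2[unfolded Kn_def] \<tau>2[unfolded Kn_def]] .
  then have "c \<beta> = \<rho>1 (\<tau>1 (\<tau>2 (\<rho>2 \<beta>)))" by (simp add: c_def)
  also have "\<dots> = \<rho>1 (\<rho>2 \<beta>)"
    using aut_inv(2)[OF Kn FKn \<tau>1(1)] aut_mem[OF \<rho>2 bKn] unfolding \<tau>2_def by simp
  also have "\<dots> = \<beta>" using aut_inv(2)[OF Kn FKn \<rho>1(1) bKn] unfolding \<rho>2_def by simp
  finally have cb: "c \<beta> = \<beta>" .
  have G: "gen_subfield (Fp \<union> {\<beta>}) \<subseteq> Kn" using FKn bKn by (intro gen_subfield_least Kn) auto
  have fx: "c w = id w" if "w \<in> Fp \<union> {\<beta>}" for w using that cb ac unfolding aut_def by auto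
  have "\<forall>z\<in>gen_subfield (Fp \<union> {\<beta>}). c z = id z"
    using hom_agree_gen[OF Kn hom[OF ac] hom_on_id G fx] by blast
  then have "aut Kn (gen_subfield (Fp \<union> {\<beta>})) c" using ac unfolding aut_def by simp
  then show ?thesis using eq unfolding Kn_def by blast
qed

lemma pow_in_field: "csubfield F \<Longrightarrow> x \<in> F \<Longrightarrow> x ^ n \<in> F"
  by (rule csubfield_power)

lemma ext0:
  fixes N :: nat defines "\<zeta> \<equiv> cis (2 * pi / real N)"
  assumes N: "N > 0" and Kp: "csubfield Kp" and \<rho>: "aut Kp (gen_subfield {}) \<rho>"
  shows "\<exists>\<rho>'. aut (gen_subfield (Kp \<union> {\<zeta>})) (gen_subfield {}) \<rho>' \<and> (\<forall>x\<in>Kp. \<rho>' x = \<rho> x)"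
proof -
  define Kn where "Kn = gen_subfield (Kp \<union> {\<zeta>})"
  have Kn: "csubfield Kn" unfolding Kn_def by (rule csubfield_gen)
  have zKn: "\<zeta> \<in> Kn" unfolding Kn_def using gen_subfield_sub by blast
  have h: "hom_on Kp \<rho>" using \<rho> unfolding aut_def by blast
  define g where "g = monom (1::complex) N - 1"
  have gF: "polyF Kp g" unfolding g_def
    using polyF_diff[OF Kp polyF_monom[OF Kp csubfieldD(2)[OF Kp]] polyF_1[OF Kp]] .
  have "coeff g N = 1" using N by (simp add: g_def)
  then have g0: "g \<noteq> 0" by auto
  have gz: "poly g \<zeta> = 0" using zeta_pow[OF N] by (simp add: g_def poly_monom \<zeta>_def)
  obtain \<rho>' where \<rho>': "hom_on Kn \<rho>'" "\<forall>x\<in>Kp. \<rho>' x = \<rho> x"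
    using extend_hom_ex[OF Kp h gF g0 gz] unfolding Kn_def by blast
  define \<mu> where "\<mu> = {z::complex. z ^ N = 1}"
  have \<mu>K: "\<mu> \<subseteq> Kn"
  proof
    fix z assume "z \<in> \<mu>"
    then obtain t where "z = \<zeta> ^ t" using root_unity_pow[OF N] unfolding \<mu>_def \<zeta>_def by blast
    then show "z \<in> Kn" using pow_in_field[OF Kn zKn] by simp
  qed
  have \<mu>im: "\<rho>' ` \<mu> \<subseteq> \<mu>"
  proof
    fix w assume "w \<in> \<rho>' ` \<mu>"
    then obtain z where z: "z \<in> \<mu>" "w = \<rho>' z" by blast
    have "\<rho>' z ^ N = \<rho>' (z ^ N)" using hom_power[OF Kn \<rho>'(1)] z \<mu>K by auto
    also have "\<dots> = 1" using z hom_one[OF Kn \<rho>'(1)] unfolding \<mu>_def by simp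
    finally show "w \<in> \<mu>" using z unfolding \<mu>_def by simp
  qed
  have fin: "finite \<mu>" unfolding \<mu>_def using N by (intro finite_roots_unity) simp
  have "inj_on \<rho>' \<mu>" using hom_inj_on[OF Kn \<rho>'(1)] \<mu>K by (rule inj_on_subset)
  then have \<mu>eq: "\<rho>' ` \<mu> = \<mu>" using \<mu>im fin by (simp add: endo_inj_surj)
  have z\<mu>: "\<zeta> \<in> \<mu>" using zeta_pow[OF N] unfolding \<mu>_def \<zeta>_def by simp
  have im: "\<rho>' \<zeta> \<in> Kn" using \<mu>im z\<mu> \<mu>K by blast
  obtain w where w: "w \<in> \<mu>" "\<zeta> = \<rho>' w" using \<mu>eq z\<mu> by (metis imageE)
  obtain s where s: "w = \<zeta> ^ s" using root_unity_pow[OF N] w(1) unfolding \<mu>_def \<zeta>_def by blast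
  have "\<zeta> = \<rho>' \<zeta> ^ s" using w(2) s hom_power[OF Kn \<rho>'(1) zKn] by simp
  moreover have "\<rho>' \<zeta> \<in> gen_subfield (Kp \<union> {\<rho>' \<zeta>})" using gen_subfield_sub by blast
  ultimately have bk: "\<zeta> \<in> gen_subfield (Kp \<union> {\<rho>' \<zeta>})" using pow_in_field[OF csubfield_gen] by metis
  have bij: "bij_betw \<rho>' Kn Kn"
    unfolding Kn_def by (rule ext_bij[OF Kp \<rho> \<rho>'(1)[unfolded Kn_def] _ im[unfolded Kn_def] bk]) (use \<rho>'(2) in auto)
  have "\<forall>x\<in>gen_subfield {}. \<rho>' x = x" using hom_fix_gen_empty[OF Kn \<rho>'(1)] by blast
  then have "aut Kn (gen_subfield {}) \<rho>'" using bij \<rho>'(1) unfolding aut_def by blast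
  then show ?thesis using \<rho>'(2) unfolding Kn_def by blast
qed

lemma comm0:
  fixes N :: nat defines "\<zeta> \<equiv> cis (2 * pi / real N)"
  assumes N: "N > 0" and Kn: "csubfield Kn" and zKn: "\<zeta> \<in> Kn"
    and s1: "aut Kn F \<sigma>1" and s2: "aut Kn F \<sigma>2"
  shows "\<sigma>1 (\<sigma>2 \<zeta>) = \<sigma>2 (\<sigma>1 \<zeta>)"
proof -
  have ex: "\<exists>a. \<sigma> \<zeta> = \<zeta> ^ a" if s: "aut Kn F \<sigma>" for \<sigma>
  proof -
    have h: "hom_on Kn \<sigma>" using s unfolding aut_def by blast
    have "\<sigma> \<zeta> ^ N = \<sigma> (\<zeta> ^ N)" using hom_power[OF Kn h zKn] by simp
    also have "\<dots> = 1" using zeta_pow[OF N] hom_one[OF Kn h] unfolding \<zeta>_def by simp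
    finally show ?thesis using root_unity_pow[OF N] unfolding \<zeta>_def by blast
  qed
  obtain a1 where a1: "\<sigma>1 \<zeta> = \<zeta> ^ a1" using ex[OF s1] by blast
  obtain a2 where a2: "\<sigma>2 \<zeta> = \<zeta> ^ a2" using ex[OF s2] by blast
  have h1: "hom_on Kn \<sigma>1" using s1 unfolding aut_def by blast
  have h2: "hom_on Kn \<sigma>2" using s2 unfolding aut_def by blast
  have "\<sigma>1 (\<sigma>2 \<zeta>) = \<zeta> ^ (a1 * a2)" using a1 a2 hom_power[OF Kn h1 zKn] by (simp add: power_mult)
  moreover have "\<sigma>2 (\<sigma>1 \<zeta>) = \<zeta> ^ (a2 * a1)" using a1 a2 hom_power[OF Kn h2 zKn] by (simp add: power_mult)
  ultimately show ?thesis by (simp add: mult.commute)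
qed

lemma omega:
  fixes N :: nat defines "\<zeta> \<equiv> cis (2 * pi / real N)"
  assumes N: "N > 0" and Kn: "csubfield Kn" and Fp: "csubfield Fp" and zF: "\<zeta> \<in> Fp" and FKn: "Fp \<subseteq> Kn"
    and bKn: "\<beta> \<in> Kn" and k: "k \<ge> 1" "k dvd N" "\<beta> ^ k \<in> Fp"
    and h: "hom_on Kn \<sigma>" and fx: "\<forall>x\<in>Fp. \<sigma> x = x"
  shows "\<exists>\<omega>\<in>Fp. \<sigma> \<beta> = \<omega> * \<beta> \<and> \<omega> \<noteq> 0"
proof (cases "\<beta> = 0")
  case True
  then show ?thesis using hom_zero[OF Kn h] csubfieldD(2)[OF Fp] by (intro bexI[of _ 1]) auto
next
  case False
  have "\<sigma> \<beta> ^ k = \<sigma> (\<beta> ^ k)" using hom_power[OF Kn h bKn] by simp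
  also have "\<dots> = \<beta> ^ k" using fx k(3) by blast
  finally have pk: "\<sigma> \<beta> ^ k = \<beta> ^ k" .
  define \<omega> where "\<omega> = \<sigma> \<beta> / \<beta>"
  have "\<omega> ^ k = 1" unfolding \<omega>_def using pk False by (simp add: power_divide)
  moreover obtain l where l: "N = k * l" using k(2) by blast
  ultimately have "\<omega> ^ N = 1" by (simp add: power_mult)
  then obtain t where "\<omega> = \<zeta> ^ t" using root_unity_pow[OF N] unfolding \<zeta>_def by blast
  then have "\<omega> \<in> Fp" using pow_in_field[OF Fp zF] by simp
  moreover have "\<sigma> \<beta> = \<omega> * \<beta>" unfolding \<omega>_def using False by simp
  moreover have "\<omega> \<noteq> 0" using \<open>\<omega> ^ k = 1\<close> k(1) by (metis power_0_left zero_neq_one not_one_le_zero power_eq_0_iff)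
  ultimately show ?thesis by blast
qed

lemma extk:
  fixes N :: nat defines "\<zeta> \<equiv> cis (2 * pi / real N)"
  assumes N: "N > 0" and Kp: "csubfield Kp" and Fp: "csubfield Fp" and zF: "\<zeta> \<in> Fp" and FKp: "Fp \<subseteq> Kp"
    and k: "k \<ge> 1" "k dvd N" "\<beta> ^ k \<in> Fp" and \<rho>: "aut Kp Fp \<rho>"
  shows "\<exists>\<rho>'. aut (gen_subfield (Kp \<union> {\<beta>})) Fp \<rho>' \<and> (\<forall>x\<in>Kp. \<rho>' x = \<rho> x)"
proof -
  define Kn where "Kn = gen_subfield (Kp \<union> {\<beta>})"
  have Kn: "csubfield Kn" unfolding Kn_def by (rule csubfield_gen)
  have bKn: "\<beta> \<in> Kn" unfolding Kn_def using gen_subfield_sub by blast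
  have KpKn: "Kp \<subseteq> Kn" unfolding Kn_def using gen_subfield_sub by blast
  have h: "hom_on Kp \<rho>" using \<rho> unfolding aut_def by blast
  define g where "g = monom (1::complex) k - [:\<beta> ^ k:]"
  have bkK: "\<beta> ^ k \<in> Kp" using k(3) FKp by blast
  have gF: "polyF Kp g" unfolding g_def
    using polyF_diff[OF Kp polyF_monom[OF Kp csubfieldD(2)[OF Kp]] polyF_const[OF Kp bkK]] .
  have "coeff g k = 1" using k(1) by (simp add: g_def coeff_pCons split: nat.split)
  then have g0: "g \<noteq> 0" by auto
  have gz: "poly g \<beta> = 0" by (simp add: g_def poly_monom)
  obtain \<rho>' where \<rho>': "hom_on Kn \<rho>'" "\<forall>x\<in>Kp. \<rho>' x = \<rho> x"
    using extend_hom_ex[OF Kp h gF g0 gz] unfolding Kn_def by blast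
  have fx: "\<forall>x\<in>Fp. \<rho>' x = x" using \<rho>'(2) \<rho> FKp unfolding aut_def by auto
  obtain \<omega> where \<omega>: "\<omega> \<in> Fp" "\<rho>' \<beta> = \<omega> * \<beta>" "\<omega> \<noteq> 0"
    using omega[OF N Kn Fp zF[unfolded \<zeta>_def] _ bKn k \<rho>'(1) fx] FKp KpKn by blast
  have im: "\<rho>' \<beta> \<in> Kn" using \<omega> FKp KpKn bKn csubfieldD(4)[OF Kn] by auto
  have G: "csubfield (gen_subfield (Kp \<union> {\<rho>' \<beta>}))" by (rule csubfield_gen)
  have "\<beta> = \<rho>' \<beta> / \<omega>" using \<omega> by simp
  moreover have "\<rho>' \<beta> \<in> gen_subfield (Kp \<union> {\<rho>' \<beta>})" "\<omega> \<in> gen_subfield (Kp \<union> {\<rho>' \<beta>})"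
    using gen_subfield_sub \<omega>(1) FKp by blast+
  ultimately have bk: "\<beta> \<in> gen_subfield (Kp \<union> {\<rho>' \<beta>})" using csubfield_divide[OF G] by metis
  have bij: "bij_betw \<rho>' Kn Kn"
    unfolding Kn_def by (rule ext_bij[OF Kp \<rho> \<rho>'(1)[unfolded Kn_def] _ im[unfolded Kn_def] bk]) (use \<rho>'(2) in auto)
  then have "aut Kn Fp \<rho>'" using \<rho>'(1) fx unfolding aut_def by blast
  then show ?thesis using \<rho>'(2) unfolding Kn_def by blast
qed

lemma commk:
  fixes N :: nat defines "\<zeta> \<equiv> cis (2 * pi / real N)"
  assumes N: "N > 0" and Kn: "csubfield Kn" and Fp: "csubfield Fp" and zF: "\<zeta> \<in> Fp" and FKn: "Fp \<subseteq> Kn"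
    and bKn: "\<beta> \<in> Kn" and k: "k \<ge> 1" "k dvd N" "\<beta> ^ k \<in> Fp"
    and s1: "aut Kn Fp \<sigma>1" and s2: "aut Kn Fp \<sigma>2"
  shows "\<sigma>1 (\<sigma>2 \<beta>) = \<sigma>2 (\<sigma>1 \<beta>)"
proof -
  have h1: "hom_on Kn \<sigma>1" and f1: "\<forall>x\<in>Fp. \<sigma>1 x = x" using s1 unfolding aut_def by auto
  have h2: "hom_on Kn \<sigma>2" and f2: "\<forall>x\<in>Fp. \<sigma>2 x = x" using s2 unfolding aut_def by auto
  obtain \<omega>1 where w1: "\<omega>1 \<in> Fp" "\<sigma>1 \<beta> = \<omega>1 * \<beta>"
    using omega[OF N Kn Fp zF[unfolded \<zeta>_def] FKn bKn k h1 f1] by blast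
  obtain \<omega>2 where w2: "\<omega>2 \<in> Fp" "\<sigma>2 \<beta> = \<omega>2 * \<beta>"
    using omega[OF N Kn Fp zF[unfolded \<zeta>_def] FKn bKn k h2 f2] by blast
  have "\<sigma>1 (\<sigma>2 \<beta>) = \<omega>2 * (\<omega>1 * \<beta>)"
    using w1 w2 hom_mult[OF Kn h1, of \<omega>2 \<beta>] FKn bKn f1 by auto
  moreover have "\<sigma>2 (\<sigma>1 \<beta>) = \<omega>1 * (\<omega>2 * \<beta>)"
    using w1 w2 hom_mult[OF Kn h2, of \<omega>1 \<beta>] FKn bKn f2 by auto
  ultimately show ?thesis by (simp add: algebra_simps)
qed

lemma gal_solvable:
  fixes p :: "rat poly"
  defines "R \<equiv> {z::complex. poly (map_poly of_rat p) z = 0}"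
  assumes p0: "p \<noteq> 0" and N: "N > 0" and tw: "tower N zs" and Rz: "R \<subseteq> gen_subfield (set zs)"
  shows "solvable (Gal (gen_subfield R))"
proof -
  define K where "K = gen_subfield R"
  have K: "csubfield K" unfolding K_def by (rule csubfield_gen)
  interpret G: group "Gal K" by (rule Gal_group[OF K])
  define \<zeta> where "\<zeta> = cis (2 * pi / real N)"
  define bs where "bs = \<zeta> # zs"
  define Fs where "Fs n = gen_subfield (set (take n bs))" for n
  define Ks where "Ks n = gen_subfield (R \<union> set (take n bs))" for n
  define H where "H n = {restr K \<rho> | \<rho>. aut (Ks n) (Fs n) \<rho>}" for n
  have Ksf: "csubfield (Ks n)" for n unfolding Ks_def by (rule csubfield_gen)
  have Fsf: "csubfield (Fs n)" for n unfolding Fs_def by (rule csubfield_gen)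
  have KKs: "K \<subseteq> Ks n" for n unfolding K_def Ks_def by (rule gen_subfield_mono) blast
  have FKs: "Fs n \<subseteq> Ks n" for n unfolding Fs_def Ks_def by (rule gen_subfield_mono) blast
  have Kim: "\<rho> ` K = K" if "csubfield L" "K \<subseteq> L" "hom_on L \<rho>" for L \<rho>
  proof -
    have "R \<subseteq> L" using that(2) gen_subfield_sub[of R] unfolding K_def by blast
    then show ?thesis unfolding K_def R_def using hom_roots_image[OF that(1) that(3) p0] by blast
  qed
  have imKs: "\<rho> ` K = K" if "aut (Ks n) (Fs n) \<rho>" for n \<rho>
    using Kim[OF Ksf KKs] that unfolding aut_def by blast
  have Hsub: "subgroup (H n) (Gal K)" for n
  proof (rule G.subgroupI)
    show "H n \<subseteq> carrier (Gal K)"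
      unfolding H_def using aut_restr_K[OF Ksf KKs K _ imKs] by blast
    show "H n \<noteq> {}" unfolding H_def using aut_id by blast
  next
    fix a assume "a \<in> H n"
    then obtain \<rho> where \<rho>: "a = restr K \<rho>" "aut (Ks n) (Fs n) \<rho>" unfolding H_def by blast
    have "inv\<^bsub>Gal K\<^esub> a = restr K (inv_into (Ks n) \<rho>)"
      unfolding \<rho>(1) by (rule Gal_inv[OF Ksf KKs K FKs \<rho>(2) imKs[OF \<rho>(2)]])
    moreover have "aut (Ks n) (Fs n) (inv_into (Ks n) \<rho>)" using aut_inv(1)[OF Ksf FKs \<rho>(2)] .
    ultimately show "inv\<^bsub>Gal K\<^esub> a \<in> H n" unfolding H_def by blast
  next
    fix a b assume "a \<in> H n" "b \<in> H n"
    then obtain \<rho> \<tau> where r: "a = restr K \<rho>" "aut (Ks n) (Fs n) \<rho>" and t: "b = restr K \<tau>" "aut (Ks n) (Fs n) \<tau>"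
      unfolding H_def by blast
    have "a \<otimes>\<^bsub>Gal K\<^esub> b = restr K (\<rho> \<circ> \<tau>)"
    proof -
      have "\<tau> z \<in> K" if "z \<in> K" for z using imKs[OF t(2)] that by blast
      then have "restr K (\<rho> \<circ> \<tau>) = restr K \<rho> \<circ> restr K \<tau>" by (rule restr_comp)
      then show ?thesis using r t by (simp add: Gal_def)
    qed
    then show "a \<otimes>\<^bsub>Gal K\<^esub> b \<in> H n" unfolding H_def using aut_comp[OF r(2) t(2)] by blast
  qed
  have take_Suc: "take (Suc n) bs = take n bs @ [bs ! n]" if "n < length bs" for n
    using that by (simp add: take_Suc_conv_app_nth)
  have KsSuc: "Ks (Suc n) = gen_subfield (Ks n \<union> {bs ! n})" if "n < length bs" for n
    unfolding Ks_def take_Suc[OF that] gen_subfield_Un_gen by (simp add: Un_assoc)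
  have FsSuc: "Fs (Suc n) = gen_subfield (Fs n \<union> {bs ! n})" if "n < length bs" for n
    unfolding Fs_def take_Suc[OF that] gen_subfield_Un_gen[of "set (take n bs)" "{bs ! n}"]
    by (simp add: Un_commute)
  have step: "x \<otimes>\<^bsub>Gal K\<^esub> y \<otimes>\<^bsub>Gal K\<^esub> inv\<^bsub>Gal K\<^esub> x \<otimes>\<^bsub>Gal K\<^esub> inv\<^bsub>Gal K\<^esub> y \<in> H (Suc n)"
    if n: "n < length bs" and x: "x \<in> H n" and y: "y \<in> H n" for n x y
  proof -
    obtain \<rho> where r: "x = restr K \<rho>" "aut (Ks n) (Fs n) \<rho>" using x unfolding H_def by blast
    obtain \<tau> where t: "y = restr K \<tau>" "aut (Ks n) (Fs n) \<tau>" using y unfolding H_def by blast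
    let ?\<beta> = "bs ! n"
    let ?Kn = "gen_subfield (Ks n \<union> {?\<beta>})"
    have Kn: "csubfield ?Kn" by (rule csubfield_gen)
    have bKn: "?\<beta> \<in> ?Kn" using gen_subfield_sub by blast
    have FKn: "Fs n \<subseteq> ?Kn" using FKs gen_subfield_sub by blast
    have ExtComm: "(\<forall>\<rho>. aut (Ks n) (Fs n) \<rho> \<longrightarrow> (\<exists>\<rho>'. aut ?Kn (Fs n) \<rho>' \<and> (\<forall>x\<in>Ks n. \<rho>' x = \<rho> x)))
      \<and> (\<forall>\<sigma>1 \<sigma>2. aut ?Kn (Fs n) \<sigma>1 \<longrightarrow> aut ?Kn (Fs n) \<sigma>2 \<longrightarrow> \<sigma>1 (\<sigma>2 ?\<beta>) = \<sigma>2 (\<sigma>1 ?\<beta>))"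
    proof (cases n)
      case 0
      have b: "?\<beta> = \<zeta>" using 0 by (simp add: bs_def)
      have F0: "Fs n = gen_subfield {}" using 0 by (simp add: Fs_def)
      have zz: "cis (2 * pi / real N) \<in> gen_subfield (Ks n \<union> {\<zeta>})"
        using gen_subfield_sub unfolding \<zeta>_def by blast
      show ?thesis unfolding F0 b
        using ext0[OF N Ksf, of n] comm0[OF N csubfield_gen zz] unfolding \<zeta>_def by blast
    next
      case (Suc j)
      have j: "j < length zs" using n Suc by (simp add: bs_def)
      have b: "?\<beta> = zs ! j" using Suc by (simp add: bs_def)
      obtain k where k: "k \<ge> 1" "k dvd N" "(zs ! j) ^ k \<in> gen_subfield (set (take j zs))"
        using tw j unfolding tower_def by blast
      have tk: "take n bs = \<zeta> # take j zs" using Suc by (simp add: bs_def)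
      have zF: "\<zeta> \<in> Fs n" unfolding Fs_def tk using gen_subfield_sub by fastforce
      have "gen_subfield (set (take j zs)) \<subseteq> Fs n" unfolding Fs_def tk by (rule gen_subfield_mono) auto
      then have kF: "?\<beta> ^ k \<in> Fs n" using k(3) b by auto
      show ?thesis
        using extk[OF N Ksf Fsf zF[unfolded \<zeta>_def] FKs k(1,2) kF]
          commk[OF N Kn Fsf zF[unfolded \<zeta>_def] FKn bKn k(1,2) kF] by blast
    qed
    have ex: "\<exists>c. aut ?Kn (gen_subfield (Fs n \<union> {?\<beta>})) c \<and>
      x \<otimes>\<^bsub>Gal K\<^esub> y \<otimes>\<^bsub>Gal K\<^esub> inv\<^bsub>Gal K\<^esub> x \<otimes>\<^bsub>Gal K\<^esub> inv\<^bsub>Gal K\<^esub> y = restr K c"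
    proof -
      have Ext: "\<exists>\<rho>'. aut ?Kn (Fs n) \<rho>' \<and> (\<forall>x\<in>Ks n. \<rho>' x = \<rho>0 x)" if "aut (Ks n) (Fs n) \<rho>0" for \<rho>0
        using ExtComm that by blast
      have Comm: "\<sigma>1 (\<sigma>2 ?\<beta>) = \<sigma>2 (\<sigma>1 ?\<beta>)" if "aut ?Kn (Fs n) \<sigma>1" "aut ?Kn (Fs n) \<sigma>2" for \<sigma>1 \<sigma>2
        using ExtComm that by blast
      show ?thesis
        apply (rule comm_step[where Kp="Ks n" and Fp="Fs n" and K=K and \<beta>="bs ! n"])
                  apply (rule Ksf)
                 apply (rule FKs)
                apply (rule K)
               apply (rule KKs)
              apply (rule Kim; assumption)
             apply (erule Ext)
            apply (rule Comm; assumption)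
           apply (rule r(1))
          apply (rule r(2))
         apply (rule t(1))
        apply (rule t(2))
        done
    qed
    then obtain c where c: "aut ?Kn (gen_subfield (Fs n \<union> {?\<beta>})) c"
      "x \<otimes>\<^bsub>Gal K\<^esub> y \<otimes>\<^bsub>Gal K\<^esub> inv\<^bsub>Gal K\<^esub> x \<otimes>\<^bsub>Gal K\<^esub> inv\<^bsub>Gal K\<^esub> y = restr K c"
      by blast
    then show ?thesis unfolding H_def KsSuc[OF n] FsSuc[OF n] by blast
  qed
  have chain: "n \<le> length bs \<Longrightarrow> (derived (Gal K) ^^ n) (carrier (Gal K)) \<subseteq> H n" for n
  proof (induction n)
    case 0
    have F0: "Fs 0 = gen_subfield {}" by (simp add: Fs_def)
    have K0: "Ks 0 = K" by (simp add: Ks_def K_def)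
    have e: "gen_subfield {} \<subseteq> (\<rat> :: complex set)"
      by (intro gen_subfield_least csubfield_Rats_set) simp
    show ?case
    proof
      fix \<sigma> assume "\<sigma> \<in> (derived (Gal K) ^^ 0) (carrier (Gal K))"
      then have "\<sigma> \<in> gal_auts K" by (simp add: Gal_def)
      then have a: "aut K \<rat> \<sigma>" and out: "\<forall>z. z \<notin> K \<longrightarrow> \<sigma> z = z" using gal_auts_iff[OF K] by blast+
      have "aut (Ks 0) (Fs 0) \<sigma>" using a e unfolding F0 K0 aut_def by blast
      moreover have "restr K \<sigma> = \<sigma>" using out by (auto simp: restr_def fun_eq_iff)
      ultimately show "\<sigma> \<in> H 0" unfolding H_def by (metis (mono_tags, lifting) mem_Collect_eq)
    qed
  next
    case (Suc n)
    then have IH: "(derived (Gal K) ^^ n) (carrier (Gal K)) \<subseteq> H n" and n: "n < length bs" by auto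
    have "derived_set (Gal K) ((derived (Gal K) ^^ n) (carrier (Gal K))) \<subseteq> H (Suc n)"
      using step[OF n] IH by blast
    then have "derived (Gal K) ((derived (Gal K) ^^ n) (carrier (Gal K))) \<subseteq> H (Suc n)"
      unfolding derived_def by (rule G.generate_subgroup_incl[OF _ Hsub])
    then show ?case by simp
  qed
  define m where "m = length bs"
  have last: "H m \<subseteq> {\<one>\<^bsub>Gal K\<^esub>}"
  proof
    fix a assume "a \<in> H m"
    then obtain \<rho> where r: "a = restr K \<rho>" "aut (Ks m) (Fs m) \<rho>" unfolding H_def by blast
    have "Fs m = gen_subfield (set bs)" unfolding Fs_def m_def by simp
    moreover have "R \<subseteq> gen_subfield (set bs)"
      using Rz gen_subfield_mono[of "set zs" "set bs"] unfolding bs_def by auto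
    ultimately have KF: "K \<subseteq> Fs m" unfolding K_def using gen_subfield_least[OF _ Fsf] by blast
    then have "\<rho> z = z" if "z \<in> K" for z using r(2) that unfolding aut_def by blast
    then have "a = id" unfolding r(1) restr_def by (auto simp: fun_eq_iff)
    then show "a \<in> {\<one>\<^bsub>Gal K\<^esub>}" by (simp add: Gal_def)
  qed
  have "(derived (Gal K) ^^ m) (carrier (Gal K)) \<subseteq> {\<one>\<^bsub>Gal K\<^esub>}"
    using chain[of m] last unfolding m_def by auto
  moreover have "\<one>\<^bsub>Gal K\<^esub> \<in> (derived (Gal K) ^^ m) (carrier (Gal K))"
    using subgroup.one_closed[OF G.exp_of_derived_is_subgroup[OF G.subgroup_self]] by blast
  ultimately have "(derived (Gal K) ^^ m) (carrier (Gal K)) = {\<one>\<^bsub>Gal K\<^esub>}" by blast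
  then show ?thesis unfolding K_def[symmetric] using G.solvable_iff_trivial_derived_seq by blast
qed

theorem lemma7:
  fixes \<alpha> :: complex and p :: "rat poly" and n :: nat
  assumes "radical_computable \<alpha>"
    and "irreducible p"
    and "poly (map_poly of_rat p) \<alpha> = 0"
    and "n \<ge> 5"
  shows "\<not> (\<exists>H. subgroup H (Gal (splitting_field p))
              \<and> sym_group n \<cong> (Gal (splitting_field p))\<lparr>carrier := H\<rparr>)"
proof
  assume "\<exists>H. subgroup H (Gal (splitting_field p)) \<and> sym_group n \<cong> (Gal (splitting_field p))\<lparr>carrier := H\<rparr>"
  then obtain H where H: "subgroup H (Gal (splitting_field p))"
    and iso: "sym_group n \<cong> (Gal (splitting_field p))\<lparr>carrier := H\<rparr>" by blast
  obtain N zs where t: "N > 0" "tower N zs" "{z. poly (map_poly of_rat p) z = 0} \<subseteq> gen_subfield (set zs)"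
    using all_roots_tower[OF assms(1-3)] by blast
  have p0: "p \<noteq> 0" using assms(2) by auto
  have sol: "solvable (Gal (splitting_field p))"
    unfolding splitting_field_def using gal_solvable[OF p0 t] .
  have K: "csubfield (splitting_field p)" unfolding splitting_field_def by (rule csubfield_gen)
  obtain h where h: "h \<in> iso (sym_group n) ((Gal (splitting_field p))\<lparr>carrier := H\<rparr>)"
    using iso unfolding is_iso_def by blast
  have Hc: "H \<subseteq> carrier (Gal (splitting_field p))" using H by (rule subgroup.subset)
  have hh: "h \<in> hom (sym_group n) (Gal (splitting_field p))"
    using h Hc unfolding iso_def hom_def by auto
  have gh: "group_hom (sym_group n) (Gal (splitting_field p)) h"
    using hh sym_group_is_group Gal_group[OF K] by (simp add: group_hom_def group_hom_axioms_def)
  have inj: "inj_on h (carrier (sym_group n))" using h unfolding iso_def bij_betw_def by auto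
  have "solvable (sym_group n)" using group_hom.inj_hom_imp_solvable[OF gh inj sol] .
  then show False using sym_group_is_unsolvable[OF assms(4)] by blast
qed

end
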